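(* Let $Z(x_+)$ be an $N\times M$ complex matrix (of rank $M$) whose entries are holomorphic functions of $x_+$, defining a holomorphic solution $Z:S^2\to G(M,N)$ of the bosonic grassmannian $G(M,N)$ sigma model, and suppose the associated surface has constant Gaussian curvature, i.e. with $g=\partial_+\partial_-\ln\det(Z^\dagger Z)$ one has $\kappa:=-\frac{1}{g}\partial_+\partial_-\ln g$ equal to a constant. Let $\eta(x_+)$ be a fermionic (Grassmann-odd) function of $x_+$, let $\theta_+$ be a Grassmann-odd coordinate, and consider the supersymmetric invariant holomorphic extension $$W(x_+,\theta_+)=Z(x_+)+i\theta_+\eta(x_+)\,\partial_+Z(x_+).$$ Define the supersymmetric metric $\tilde g=\partial_+\partial_-\ln\det(W^\dagger W)$ and the supersymmetric Gaussian curvature $\tilde\kappa=-\frac{1}{\tilde g}\partial_+\partial_-\ln\tilde g$. Then $\tilde\kappa$ is constant and $\tilde\kappa=\kappa$.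
   Context: The superspace has bosonic coordinates $x_\pm$ ($x_-$ the complex conjugate of $x_+$, bosonic part compactified to $S^2$) and anticommuting Grassmann coordinates $\theta_\pm$; $\partial_\pm=\partial/\partial x_\pm$. Conjugation $\dagger$ sends functions of $(x_+,\theta_+)$ to functions of $(x_-,\theta_-)$, with $\eta^\dagger=\eta^\dagger(x_-)$. The grassmannian $G(M,N)$ is the space of $M$-dimensional subspaces of $\mathbb{C}^N$; a holomorphic solution of the bosonic $G(M,N)$ sigma model is given (up to gauge) by an $N\times M$ matrix $Z(x_+)$ depending holomorphically on $x_+$ only, the map being its column span. Functions of Grassmann variables are expanded as finite polynomials in $\theta_\pm$, and $\ln$ is defined by the (terminating) Taylor expansion in the nilpotent parts. *)

theory Defs
  imports "HOL-Analysis.Analysis" "HOL-Combinatorics.Permutations"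
begin

section \<open>Wirtinger derivatives on the plane (x_+ = z, x_- = cnj z)\<close>

definition wirt_p :: "(complex \<Rightarrow> complex) \<Rightarrow> complex \<Rightarrow> complex" where
  "wirt_p f z = (frechet_derivative f (at z) 1 - \<i> * frechet_derivative f (at z) \<i>) / 2"

definition wirt_m :: "(complex \<Rightarrow> complex) \<Rightarrow> complex \<Rightarrow> complex" where
  "wirt_m f z = (frechet_derivative f (at z) 1 + \<i> * frechet_derivative f (at z) \<i>) / 2"

definition wirt_pm :: "(complex \<Rightarrow> complex) \<Rightarrow> complex \<Rightarrow> complex" where
  "wirt_pm f = wirt_p (wirt_m f)"

text \<open>An element is given by its coefficients: the coefficient of the monomial
 xi_{a1} ... xi_{ak} (a1 < ... < ak) is stored at the set {a1,...,ak}.\<close>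

type_synonym 'g grass = "'g set \<Rightarrow> complex"

definition gconst :: "complex \<Rightarrow> 'g grass" where
  "gconst c = (\<lambda>S. if S = {} then c else 0)"

definition gen :: "'g \<Rightarrow> 'g grass" where
  "gen a = (\<lambda>S. if S = {a} then 1 else 0)"

definition gbody :: "'g grass \<Rightarrow> complex" where
  "gbody x = x {}"

definition gadd :: "'g grass \<Rightarrow> 'g grass \<Rightarrow> 'g grass" where
  "gadd x y = (\<lambda>S. x S + y S)"

definition gscale :: "complex \<Rightarrow> 'g grass \<Rightarrow> 'g grass" where
  "gscale c x = (\<lambda>S. c * x S)"

definition gsum :: "('i \<Rightarrow> 'g grass) \<Rightarrow> 'i set \<Rightarrow> 'g grass" where
  "gsum f A = (\<lambda>S. \<Sum>i\<in>A. f i S)"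

text \<open>sign of xi_A xi_B = sgn * xi_{A \<union> B} for disjoint A, B\<close>
definition merge_sign :: "'g::linorder set \<Rightarrow> 'g set \<Rightarrow> complex" where
  "merge_sign A B = (-1) ^ card {(a, b). a \<in> A \<and> b \<in> B \<and> b < a}"

definition gmul :: "'g::linorder grass \<Rightarrow> 'g grass \<Rightarrow> 'g grass" where
  "gmul x y = (\<lambda>S. \<Sum>A\<in>Pow S. merge_sign A (S - A) * x A * y (S - A))"

definition gpow :: "'g::linorder grass \<Rightarrow> nat \<Rightarrow> 'g grass" where
  "gpow x k = ((gmul x) ^^ k) (gconst 1)"

definition gprod_list :: "'g::linorder grass list \<Rightarrow> 'g grass" where
  "gprod_list xs = foldr gmul xs (gconst 1)"

definition gsoul :: "'g grass \<Rightarrow> 'g grass" where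
  "gsoul x = (\<lambda>S. if S = {} then 0 else x S)"

text \<open>inverse and logarithm by the terminating Taylor expansion in the nilpotent part
 (all products of more than CARD('g) nilpotent elements vanish)\<close>
definition ginv :: "'g::{finite,linorder} grass \<Rightarrow> 'g grass" where
  "ginv x = gsum (\<lambda>k. gscale ((-1) ^ k / gbody x ^ (k + 1)) (gpow (gsoul x) k)) {0..CARD('g)}"

definition gln :: "'g::{finite,linorder} grass \<Rightarrow> 'g grass" where
  "gln x = gadd (gconst (Ln (gbody x)))
     (gsum (\<lambda>k. gscale ((-1) ^ (k + 1) / (of_nat k * gbody x ^ k)) (gpow (gsoul x) k))
       {1..CARD('g)})"

text \<open>Conjugation: antilinear anti-automorphism (ab)^dagger = b^dagger a^dagger,
 acting on generators by the involution sigma (sigma theta_+ = theta_-).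
 (xi_{a1}...xi_{ak})^dagger = xi_{sigma ak} ... xi_{sigma a1}, reordered.\<close>
definition gconj :: "('g::linorder \<Rightarrow> 'g) \<Rightarrow> 'g grass \<Rightarrow> 'g grass" where
  "gconj \<sigma> x = (\<lambda>T. let S = \<sigma> ` T in
      (-1) ^ card {(a, b). a \<in> S \<and> b \<in> S \<and> a < b \<and> \<sigma> a < \<sigma> b} * cnj (x S))"

section \<open>Superfunctions on the superspace: x_+ \<mapsto> Grassmann-valued (coefficients
  are functions of x_+, x_- = cnj x_+; theta_\<plusminus> are generators)\<close>

definition sd_p :: "(complex \<Rightarrow> 'g grass) \<Rightarrow> complex \<Rightarrow> 'g grass" where
  "sd_p F z = (\<lambda>S. wirt_p (\<lambda>w. F w S) z)"

definition sd_m :: "(complex \<Rightarrow> 'g grass) \<Rightarrow> complex \<Rightarrow> 'g grass" where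
  "sd_m F z = (\<lambda>S. wirt_m (\<lambda>w. F w S) z)"

definition sd_pm :: "(complex \<Rightarrow> 'g grass) \<Rightarrow> complex \<Rightarrow> 'g grass" where
  "sd_pm F = sd_p (sd_m F)"

definition cdet :: "nat \<Rightarrow> (nat \<Rightarrow> nat \<Rightarrow> complex) \<Rightarrow> complex" where
  "cdet m A = (\<Sum>p\<in>{p. p permutes {0..<m}}. of_int (sign p) * (\<Prod>i<m. A i (p i)))"

definition gdet :: "nat \<Rightarrow> (nat \<Rightarrow> nat \<Rightarrow> 'g::linorder grass) \<Rightarrow> 'g grass" where
  "gdet m A = gsum (\<lambda>p. gscale (of_int (sign p)) (gprod_list (map (\<lambda>i. A i (p i)) [0..<m])))
      {p. p permutes {0..<m}}"

text \<open>Z z i j, i < N rows, j < M columns; Z^dagger Z\<close>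
definition ZdZ :: "nat \<Rightarrow> (complex \<Rightarrow> nat \<Rightarrow> nat \<Rightarrow> complex) \<Rightarrow> complex \<Rightarrow> nat \<Rightarrow> nat \<Rightarrow> complex" where
  "ZdZ N Z z i k = (\<Sum>j<N. cnj (Z z j i) * Z z j k)"

definition bos_metric :: "nat \<Rightarrow> nat \<Rightarrow> (complex \<Rightarrow> nat \<Rightarrow> nat \<Rightarrow> complex) \<Rightarrow> complex \<Rightarrow> complex" where
  "bos_metric N M Z = wirt_pm (\<lambda>z. Ln (cdet M (ZdZ N Z z)))"

definition bos_curv :: "nat \<Rightarrow> nat \<Rightarrow> (complex \<Rightarrow> nat \<Rightarrow> nat \<Rightarrow> complex) \<Rightarrow> complex \<Rightarrow> complex" where
  "bos_curv N M Z z = - (wirt_pm (\<lambda>w. Ln (bos_metric N M Z w)) z) / bos_metric N M Z z"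

definition superW :: "'g::linorder \<Rightarrow> (complex \<Rightarrow> 'g grass) \<Rightarrow> (complex \<Rightarrow> nat \<Rightarrow> nat \<Rightarrow> complex)
    \<Rightarrow> complex \<Rightarrow> nat \<Rightarrow> nat \<Rightarrow> 'g grass" where
  "superW \<theta>p \<eta> Z z i j = gadd (gconst (Z z i j))
      (gmul (gscale \<i> (gmul (gen \<theta>p) (\<eta> z))) (gconst (wirt_p (\<lambda>w. Z w i j) z)))"

definition WdW :: "nat \<Rightarrow> ('g::linorder \<Rightarrow> 'g) \<Rightarrow> (complex \<Rightarrow> nat \<Rightarrow> nat \<Rightarrow> 'g grass)
    \<Rightarrow> complex \<Rightarrow> nat \<Rightarrow> nat \<Rightarrow> 'g grass" where
  "WdW N \<sigma> W z i k = gsum (\<lambda>j. gmul (gconj \<sigma> (W z j i)) (W z j k)) {..<N}"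

definition susy_metric :: "nat \<Rightarrow> nat \<Rightarrow> ('g::{finite,linorder} \<Rightarrow> 'g) \<Rightarrow> (complex \<Rightarrow> nat \<Rightarrow> nat \<Rightarrow> 'g grass)
    \<Rightarrow> complex \<Rightarrow> 'g grass" where
  "susy_metric N M \<sigma> W = sd_pm (\<lambda>z. gln (gdet M (WdW N \<sigma> W z)))"

definition susy_curv :: "nat \<Rightarrow> nat \<Rightarrow> ('g::{finite,linorder} \<Rightarrow> 'g) \<Rightarrow> (complex \<Rightarrow> nat \<Rightarrow> nat \<Rightarrow> 'g grass)
    \<Rightarrow> complex \<Rightarrow> 'g grass" where
  "susy_curv N M \<sigma> W z = gscale (-1)
     (gmul (ginv (susy_metric N M \<sigma> W z)) (sd_pm (\<lambda>w. gln (susy_metric N M \<sigma> W w)) z))"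

end

theory Submission
  imports Defs "HOL-Complex_Analysis.Cauchy_Integral_Formula"
begin

definition hw :: "(complex \<Rightarrow> complex) \<Rightarrow> complex \<Rightarrow> complex \<Rightarrow> complex \<Rightarrow> bool" where
  "hw f a b z \<longleftrightarrow> (f has_derivative (\<lambda>h. a * h + b * cnj h)) (at z)"

lemma hw_wirt:
  assumes "hw f a b z" shows "wirt_p f z = a" "wirt_m f z = b"
proof -
  have "frechet_derivative f (at z) = (\<lambda>h. a * h + b * cnj h)"
    using assms frechet_derivative_at unfolding hw_def by metis
  then show "wirt_p f z = a" "wirt_m f z = b"
    unfolding wirt_p_def wirt_m_def by (simp_all add: algebra_simps)
qed

lemma hw_diff: "hw f a b z \<Longrightarrow> f differentiable (at z)"
  unfolding hw_def differentiable_def by blast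

lemma diff_hw:
  assumes "f differentiable (at z)"
  shows "hw f (wirt_p f z) (wirt_m f z) z"
proof -
  let ?L = "frechet_derivative f (at z)"
  have d: "(f has_derivative ?L) (at z)" using assms frechet_derivative_works by blast
  have lin: "linear ?L" using has_derivative_linear[OF d] .
  have eq: "?L h = wirt_p f z * h + wirt_m f z * cnj h" for h
  proof -
    have h: "h = Re h *\<^sub>R 1 + Im h *\<^sub>R \<i>"
      by (simp add: complex_eq_iff)
    have "?L h = Re h *\<^sub>R ?L 1 + Im h *\<^sub>R ?L \<i>"
      by (subst h) (simp add: linear_add[OF lin] linear_scale[OF lin])
    also have "\<dots> = wirt_p f z * h + wirt_m f z * cnj h"
      unfolding wirt_p_def wirt_m_def
      apply (subst (3 4) h)
      apply (simp add: scaleR_conv_of_real algebra_simps)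
      apply (simp add: field_simps)
      done
    finally show ?thesis .
  qed
  have "?L = (\<lambda>h. wirt_p f z * h + wirt_m f z * cnj h)" using eq by auto
  then show ?thesis using d unfolding hw_def by simp
qed

lemma hw_const: "hw (\<lambda>z. c) 0 0 z"
  unfolding hw_def by (simp add: has_derivative_const)

lemma hw_add: "hw f a b z \<Longrightarrow> hw g c d z \<Longrightarrow> hw (\<lambda>z. f z + g z) (a + c) (b + d) z"
  unfolding hw_def by (auto dest: has_derivative_add simp: algebra_simps)

lemma hw_mult: "hw f a b z \<Longrightarrow> hw g c d z \<Longrightarrow>
   hw (\<lambda>z. f z * g z) (a * g z + f z * c) (b * g z + f z * d) z"
  unfolding hw_def
  by (drule (1) has_derivative_mult) (simp add: algebra_simps)

lemma hw_cnj: "hw f a b z \<Longrightarrow> hw (\<lambda>z. cnj (f z)) (cnj b) (cnj a) z"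
  unfolding hw_def
  by (drule has_derivative_cnj) (simp add: algebra_simps)

lemma hw_holo: "(f has_field_derivative a) (at z) \<Longrightarrow> hw f a 0 z"
proof -
  assume "(f has_field_derivative a) (at z)"
  moreover have "(\<lambda>h. a * h + 0 * cnj h) = (*) a" by auto
  ultimately show ?thesis unfolding hw_def has_field_derivative_def by simp
qed

lemma hw_comp: "(g has_field_derivative d) (at (f z)) \<Longrightarrow> hw f a b z \<Longrightarrow>
   hw (\<lambda>z. g (f z)) (d * a) (d * b) z"
  unfolding hw_def has_field_derivative_def
  by (drule (1) has_derivative_compose[where g = g, rotated]) (simp add: algebra_simps)

lemma hw_inverse: "hw f a b z \<Longrightarrow> f z \<noteq> 0 \<Longrightarrow>
   hw (\<lambda>z. inverse (f z)) (- a / (f z)^2) (- b / (f z)^2) z"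
proof -
  assume a: "hw f a b z" "f z \<noteq> 0"
  have "(inverse has_field_derivative - (inverse (f z) ^ Suc (Suc 0))) (at (f z))"
    using DERIV_inverse a(2) by blast
  from hw_comp[OF this a(1)] show ?thesis
    by (simp add: field_simps power2_eq_square)
qed

lemma hw_Ln: "hw f a b z \<Longrightarrow> f z \<notin> \<real>\<^sub>\<le>\<^sub>0 \<Longrightarrow>
   hw (\<lambda>z. Ln (f z)) (a / f z) (b / f z) z"
  using hw_comp[of Ln "inverse (f z)" f z a b] has_field_derivative_Ln
  by (auto simp: field_simps)

primrec Sk :: "nat \<Rightarrow> (complex \<Rightarrow> complex) \<Rightarrow> bool" where
  "Sk 0 f = True"
| "Sk (Suc n) f = ((\<forall>z. f differentiable (at z)) \<and> Sk n (wirt_p f) \<and> Sk n (wirt_m f) \<and>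
      (n > 0 \<longrightarrow> wirt_p (wirt_m f) = wirt_m (wirt_p f)))"

definition smooth :: "(complex \<Rightarrow> complex) \<Rightarrow> bool" where
  "smooth f \<longleftrightarrow> (\<forall>n. Sk n f)"

lemma Sk_hw: "Sk (Suc n) f \<Longrightarrow> hw f (wirt_p f z) (wirt_m f z) z"
  by (simp add: diff_hw)

lemma Sk_SucI:
  assumes "\<And>z. hw f (a z) (b z) z" "Sk n a" "Sk n b" "n > 0 \<Longrightarrow> wirt_p b = wirt_m a"
  shows "Sk (Suc n) f"
proof -
  have e: "wirt_p f = a" "wirt_m f = b" using hw_wirt[OF assms(1)] by auto
  have "\<forall>z. f differentiable (at z)" using assms(1) hw_diff by blast
  then show ?thesis unfolding Sk.simps e using assms(2,3,4) by blast
qed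

lemma Sk_mono: "Sk (Suc n) f \<Longrightarrow> Sk n f"
proof (induction n arbitrary: f)
  case 0 then show ?case by simp
next
  case (Suc n)
  have "Sk (Suc n) (wirt_p f)" "Sk (Suc n) (wirt_m f)" using Suc.prems by auto
  then have "Sk n (wirt_p f)" "Sk n (wirt_m f)" using Suc.IH by blast+
  moreover have "\<forall>z. f differentiable (at z)" "wirt_p (wirt_m f) = wirt_m (wirt_p f)"
    using Suc.prems by auto
  ultimately show ?case by simp
qed

lemma wirt_const[simp]: "wirt_p (\<lambda>z. c) = (\<lambda>z. 0)" "wirt_m (\<lambda>z. c) = (\<lambda>z. 0)"
  using hw_wirt[OF hw_const] by auto

lemma Sk_const: "Sk n (\<lambda>z. c)"
proof (induction n arbitrary: c)
  case 0 then show ?case by simp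
next
  case (Suc n)
  show ?case by (rule Sk_SucI[of _ "\<lambda>z. 0" "\<lambda>z. 0"]) (auto simp: hw_const Suc)
qed

lemma Sk_add: "Sk n f \<Longrightarrow> Sk n g \<Longrightarrow> Sk n (\<lambda>z. f z + g z)"
proof (induction n arbitrary: f g)
  case 0 then show ?case by simp
next
  case (Suc n)
  show ?case
  proof (rule Sk_SucI[of _ "\<lambda>z. wirt_p f z + wirt_p g z" "\<lambda>z. wirt_m f z + wirt_m g z"])
    show "hw (\<lambda>z. f z + g z) (wirt_p f z + wirt_p g z) (wirt_m f z + wirt_m g z) z" for z
      using Suc.prems by (intro hw_add Sk_hw)
    show "Sk n (\<lambda>z. wirt_p f z + wirt_p g z)" "Sk n (\<lambda>z. wirt_m f z + wirt_m g z)"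
      using Suc by auto
    assume "n > 0"
    then obtain k where k: "n = Suc k" by (cases n) auto
    show "wirt_p (\<lambda>z. wirt_m f z + wirt_m g z) = wirt_m (\<lambda>z. wirt_p f z + wirt_p g z)"
    proof
      fix z
      have A: "hw (\<lambda>z. wirt_m f z + wirt_m g z) (wirt_p (wirt_m f) z + wirt_p (wirt_m g) z)
                 (wirt_m (wirt_m f) z + wirt_m (wirt_m g) z) z"
        using Suc.prems k by (intro hw_add Sk_hw) auto
      have B: "hw (\<lambda>z. wirt_p f z + wirt_p g z) (wirt_p (wirt_p f) z + wirt_p (wirt_p g) z)
                 (wirt_m (wirt_p f) z + wirt_m (wirt_p g) z) z"
        using Suc.prems k by (intro hw_add Sk_hw) auto
      show "wirt_p (\<lambda>z. wirt_m f z + wirt_m g z) z = wirt_m (\<lambda>z. wirt_p f z + wirt_p g z) z"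
        using hw_wirt[OF A] hw_wirt[OF B] Suc.prems k by simp
    qed
  qed
qed

lemma Sk_mult: "Sk n f \<Longrightarrow> Sk n g \<Longrightarrow> Sk n (\<lambda>z. f z * g z)"
proof (induction n arbitrary: f g)
  case 0 then show ?case by simp
next
  case (Suc n)
  note fs = Suc.prems(1) and gs = Suc.prems(2)
  have fn: "Sk n f" and gn: "Sk n g" using Suc.prems Sk_mono by blast+
  show ?case
  proof (rule Sk_SucI[of _ "\<lambda>z. wirt_p f z * g z + f z * wirt_p g z" "\<lambda>z. wirt_m f z * g z + f z * wirt_m g z"])
    show "hw (\<lambda>z. f z * g z) (wirt_p f z * g z + f z * wirt_p g z) (wirt_m f z * g z + f z * wirt_m g z) z" for z
      using Suc.prems by (intro hw_mult Sk_hw)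
    show "Sk n (\<lambda>z. wirt_p f z * g z + f z * wirt_p g z)" "Sk n (\<lambda>z. wirt_m f z * g z + f z * wirt_m g z)"
      using Suc fn gn by (auto intro!: Sk_add)
    assume "n > 0"
    then obtain k where k: "n = Suc k" by (cases n) auto
    show "wirt_p (\<lambda>z. wirt_m f z * g z + f z * wirt_m g z) = wirt_m (\<lambda>z. wirt_p f z * g z + f z * wirt_p g z)"
    proof
      fix z
      have fk: "Sk (Suc k) f" "Sk (Suc k) g" using fn gn k by auto
      have A: "hw (\<lambda>z. wirt_m f z * g z + f z * wirt_m g z)
         (wirt_p (wirt_m f) z * g z + wirt_m f z * wirt_p g z + (wirt_p f z * wirt_m g z + f z * wirt_p (wirt_m g) z))
         (wirt_m (wirt_m f) z * g z + wirt_m f z * wirt_m g z + (wirt_m f z * wirt_m g z + f z * wirt_m (wirt_m g) z)) z"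
        using Suc.prems k fk by (intro hw_add hw_mult Sk_hw) auto
      have B: "hw (\<lambda>z. wirt_p f z * g z + f z * wirt_p g z)
         (wirt_p (wirt_p f) z * g z + wirt_p f z * wirt_p g z + (wirt_p f z * wirt_p g z + f z * wirt_p (wirt_p g) z))
         (wirt_m (wirt_p f) z * g z + wirt_p f z * wirt_m g z + (wirt_m f z * wirt_p g z + f z * wirt_m (wirt_p g) z)) z"
        using Suc.prems k fk by (intro hw_add hw_mult Sk_hw) auto
      show "wirt_p (\<lambda>z. wirt_m f z * g z + f z * wirt_m g z) z = wirt_m (\<lambda>z. wirt_p f z * g z + f z * wirt_p g z) z"
        using hw_wirt[OF A] hw_wirt[OF B] Suc.prems k by (simp add: algebra_simps)
    qed
  qed
qed


lemma hw_uminus: "hw f a b z \<Longrightarrow> hw (\<lambda>z. - f z) (- a) (- b) z"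
  unfolding hw_def by (drule has_derivative_minus) (simp add: algebra_simps)

lemma hw_cmult: "hw f a b z \<Longrightarrow> hw (\<lambda>z. c * f z) (c * a) (c * b) z"
  using hw_mult[OF hw_const, of f a b z c] by simp

lemma Sk_cmult: "Sk n f \<Longrightarrow> Sk n (\<lambda>z. c * f z)"
  using Sk_mult[OF Sk_const] by blast

lemma Sk_uminus: "Sk n f \<Longrightarrow> Sk n (\<lambda>z. - f z)"
  using Sk_cmult[of n f "-1"] by simp

lemma Sk_inverse: "Sk n f \<Longrightarrow> (\<And>z. f z \<noteq> 0) \<Longrightarrow> Sk n (\<lambda>z. inverse (f z))"
proof (induction n arbitrary: f)
  case 0 then show ?case by simp
next
  case (Suc n)
  have fn: "Sk n f" using Suc.prems Sk_mono by blast
  have inz: "Sk n (\<lambda>z. inverse (f z))" using Suc.IH[OF fn] Suc.prems by blast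
  let ?a = "\<lambda>z. - (wirt_p f z * (inverse (f z) * inverse (f z)))"
  let ?b = "\<lambda>z. - (wirt_m f z * (inverse (f z) * inverse (f z)))"
  show ?case
  proof (rule Sk_SucI[of _ ?a ?b])
    show "hw (\<lambda>z. inverse (f z)) (?a z) (?b z) z" for z
      using hw_inverse[OF Sk_hw[OF Suc.prems(1)] Suc.prems(2)]
      by (simp add: field_simps power2_eq_square)
    show "Sk n ?a" "Sk n ?b" using Suc.prems inz
      by (auto intro!: Sk_uminus Sk_mult)
    assume "n > 0"
    then obtain k where k: "n = Suc k" by (cases n) auto
    show "wirt_p ?b = wirt_m ?a"
    proof
      fix z
      have fk: "Sk (Suc k) f" "Sk (Suc k) (wirt_p f)" "Sk (Suc k) (wirt_m f)"
        using fn k Suc.prems by auto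
      have I: "hw (\<lambda>z. inverse (f z)) (- wirt_p f z / (f z)^2) (- wirt_m f z / (f z)^2) z"
        using hw_inverse[OF Sk_hw[OF fk(1)] Suc.prems(2)] .
      have A: "hw ?b (- (wirt_p (wirt_m f) z * (inverse (f z) * inverse (f z)) + wirt_m f z * ((- wirt_p f z / (f z)^2) * inverse (f z) + inverse (f z) * (- wirt_p f z / (f z)^2))))
           (- (wirt_m (wirt_m f) z * (inverse (f z) * inverse (f z)) + wirt_m f z * ((- wirt_m f z / (f z)^2) * inverse (f z) + inverse (f z) * (- wirt_m f z / (f z)^2)))) z"
        by (intro hw_uminus hw_mult I Sk_hw[OF fk(1)] Sk_hw[OF fk(2)] Sk_hw[OF fk(3)])
      have B: "hw ?a (- (wirt_p (wirt_p f) z * (inverse (f z) * inverse (f z)) + wirt_p f z * ((- wirt_p f z / (f z)^2) * inverse (f z) + inverse (f z) * (- wirt_p f z / (f z)^2))))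
           (- (wirt_m (wirt_p f) z * (inverse (f z) * inverse (f z)) + wirt_p f z * ((- wirt_m f z / (f z)^2) * inverse (f z) + inverse (f z) * (- wirt_m f z / (f z)^2)))) z"
        by (intro hw_uminus hw_mult I Sk_hw[OF fk(1)] Sk_hw[OF fk(2)] Sk_hw[OF fk(3)])
      have c: "wirt_p (wirt_m f) = wirt_m (wirt_p f)" using Suc.prems k by simp
      show "wirt_p ?b z = wirt_m ?a z"
        unfolding hw_wirt[OF A] hw_wirt[OF B] c by (simp add: algebra_simps)
    qed
  qed
qed

lemma Sk_Ln: "Sk n f \<Longrightarrow> (\<And>z. f z \<notin> \<real>\<^sub>\<le>\<^sub>0) \<Longrightarrow> Sk n (\<lambda>z. Ln (f z))"
proof (cases n)
  case 0 then show ?thesis by simp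
next
  case (Suc n')
  assume fs: "Sk n f" and nr: "\<And>z. f z \<notin> \<real>\<^sub>\<le>\<^sub>0"
  have nz: "f z \<noteq> 0" for z using nr[of z] by auto
  have fn: "Sk n' f" using fs Suc Sk_mono by blast
  have inz: "Sk n' (\<lambda>z. inverse (f z))" using Sk_inverse[OF fn] nz by blast
  let ?a = "\<lambda>z. wirt_p f z * inverse (f z)"
  let ?b = "\<lambda>z. wirt_m f z * inverse (f z)"
  show ?thesis unfolding Suc
  proof (rule Sk_SucI[of _ ?a ?b])
    show "hw (\<lambda>z. Ln (f z)) (?a z) (?b z) z" for z
      using hw_Ln[OF Sk_hw[OF fs[unfolded Suc]] nr] by (simp add: field_simps)
    show "Sk n' ?a" "Sk n' ?b" using fs Suc inz
      by (auto intro!: Sk_mult)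
    assume "n' > 0"
    then obtain k where k: "n' = Suc k" by (cases n') auto
    show "wirt_p ?b = wirt_m ?a"
    proof
      fix z
      have fk: "Sk (Suc k) f" "Sk (Suc k) (wirt_p f)" "Sk (Suc k) (wirt_m f)"
        using fn k fs Suc by auto
      have I: "hw (\<lambda>z. inverse (f z)) (- wirt_p f z / (f z)^2) (- wirt_m f z / (f z)^2) z"
        using hw_inverse[OF Sk_hw[OF fk(1)] nz] .
      have A: "hw ?b (wirt_p (wirt_m f) z * inverse (f z) + wirt_m f z * (- wirt_p f z / (f z)^2))
           (wirt_m (wirt_m f) z * inverse (f z) + wirt_m f z * (- wirt_m f z / (f z)^2)) z"
        by (intro hw_mult I Sk_hw[OF fk(1)] Sk_hw[OF fk(2)] Sk_hw[OF fk(3)])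
      have B: "hw ?a (wirt_p (wirt_p f) z * inverse (f z) + wirt_p f z * (- wirt_p f z / (f z)^2))
           (wirt_m (wirt_p f) z * inverse (f z) + wirt_p f z * (- wirt_m f z / (f z)^2)) z"
        by (intro hw_mult I Sk_hw[OF fk(1)] Sk_hw[OF fk(2)] Sk_hw[OF fk(3)])
      have c: "wirt_p (wirt_m f) = wirt_m (wirt_p f)" using fs Suc k by simp
      show "wirt_p ?b z = wirt_m ?a z"
        unfolding hw_wirt[OF A] hw_wirt[OF B] c by (simp add: algebra_simps)
    qed
  qed
qed

lemma hw_entire: "f holomorphic_on UNIV \<Longrightarrow> hw f (deriv f z) 0 z"
  by (intro hw_holo) (meson DERIV_deriv_iff_field_differentiable UNIV_I holomorphic_on_imp_differentiable_at open_UNIV)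

lemma wirt_entire: "f holomorphic_on UNIV \<Longrightarrow> wirt_p f = deriv f \<and> wirt_m f = (\<lambda>z. 0)"
  using hw_wirt[OF hw_entire] by auto

lemma Sk_holo: "f holomorphic_on UNIV \<Longrightarrow> Sk n f"
proof (induction n arbitrary: f)
  case 0 then show ?case by simp
next
  case (Suc n)
  have d: "deriv f holomorphic_on UNIV" using Suc.prems holomorphic_deriv by blast
  show ?case
  proof (rule Sk_SucI[of _ "deriv f" "\<lambda>z. 0"])
    show "hw f (deriv f z) 0 z" for z using hw_entire[OF Suc.prems] .
    show "Sk n (deriv f)" "Sk n (\<lambda>z. 0)" using Suc.IH[OF d] Sk_const by auto
    show "wirt_p (\<lambda>z. 0) = wirt_m (deriv f)" using wirt_entire[OF d] by simp
  qed
qed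

lemma wirt_cnj: "f differentiable (at z) \<Longrightarrow>
   wirt_p (\<lambda>z. cnj (f z)) z = cnj (wirt_m f z) \<and> wirt_m (\<lambda>z. cnj (f z)) z = cnj (wirt_p f z)"
  using hw_wirt[OF hw_cnj[OF diff_hw]] by auto

lemma Sk_cnj: "Sk n f \<Longrightarrow> Sk n (\<lambda>z. cnj (f z))"
proof (induction n arbitrary: f)
  case 0 then show ?case by simp
next
  case (Suc n)
  show ?case
  proof (rule Sk_SucI[of _ "\<lambda>z. cnj (wirt_m f z)" "\<lambda>z. cnj (wirt_p f z)"])
    show "hw (\<lambda>z. cnj (f z)) (cnj (wirt_m f z)) (cnj (wirt_p f z)) z" for z
      using hw_cnj[OF Sk_hw[OF Suc.prems]] .
    have "Sk n (wirt_m f)" "Sk n (wirt_p f)" using Suc.prems by simp_all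
    then show "Sk n (\<lambda>z. cnj (wirt_m f z))" "Sk n (\<lambda>z. cnj (wirt_p f z))"
      using Suc.IH by blast+
    assume "n > 0"
    then obtain k where k: "n = Suc k" by (cases n) auto
    have d: "wirt_p f differentiable (at z)" "wirt_m f differentiable (at z)" for z
      using Suc.prems k by auto
    show "wirt_p (\<lambda>z. cnj (wirt_p f z)) = wirt_m (\<lambda>z. cnj (wirt_m f z))"
      using Suc.prems k by (auto simp: wirt_cnj[OF d(1)] wirt_cnj[OF d(2)])
  qed
qed

lemma Sk_sum: "finite A \<Longrightarrow> (\<And>i. i \<in> A \<Longrightarrow> Sk n (f i)) \<Longrightarrow> Sk n (\<lambda>z. \<Sum>i\<in>A. f i z)"
proof (induction A rule: finite_induct)
  case empty show ?case by (simp add: Sk_const)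
next
  case (insert a A) then show ?case by (simp add: Sk_add)
qed

lemma Sk_prod: "finite A \<Longrightarrow> (\<And>i. i \<in> A \<Longrightarrow> Sk n (f i)) \<Longrightarrow> Sk n (\<lambda>z. \<Prod>i\<in>A. f i z)"
proof (induction A rule: finite_induct)
  case empty show ?case by (simp add: Sk_const)
next
  case (insert a A) then show ?case by (simp add: Sk_mult)
qed

lemma smooth_const: "smooth (\<lambda>z. c)" by (simp add: smooth_def Sk_const)
lemma smooth_add: "smooth f \<Longrightarrow> smooth g \<Longrightarrow> smooth (\<lambda>z. f z + g z)" by (simp add: smooth_def Sk_add)
lemma smooth_mult: "smooth f \<Longrightarrow> smooth g \<Longrightarrow> smooth (\<lambda>z. f z * g z)" by (simp add: smooth_def Sk_mult)
lemma smooth_cmult: "smooth f \<Longrightarrow> smooth (\<lambda>z. c * f z)" by (simp add: smooth_def Sk_cmult)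
lemma smooth_uminus: "smooth f \<Longrightarrow> smooth (\<lambda>z. - f z)" by (simp add: smooth_def Sk_uminus)
lemma smooth_diff: "smooth f \<Longrightarrow> smooth g \<Longrightarrow> smooth (\<lambda>z. f z - g z)"
proof -
  assume "smooth f" "smooth g"
  then have "smooth (\<lambda>z. f z + - g z)" by (intro smooth_add smooth_uminus)
  then show ?thesis by simp
qed
lemma smooth_inverse: "smooth f \<Longrightarrow> (\<And>z. f z \<noteq> 0) \<Longrightarrow> smooth (\<lambda>z. inverse (f z))"
  by (simp add: smooth_def Sk_inverse)
lemma smooth_divide: "smooth f \<Longrightarrow> smooth g \<Longrightarrow> (\<And>z. g z \<noteq> 0) \<Longrightarrow> smooth (\<lambda>z. f z / g z)"
proof -
  assume "smooth f" "smooth g" "\<And>z. g z \<noteq> 0"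
  then have "smooth (\<lambda>z. f z * inverse (g z))" by (intro smooth_mult smooth_inverse)
  then show ?thesis by (simp add: divide_inverse)
qed
lemma smooth_Ln: "smooth f \<Longrightarrow> (\<And>z. f z \<notin> \<real>\<^sub>\<le>\<^sub>0) \<Longrightarrow> smooth (\<lambda>z. Ln (f z))"
  by (simp add: smooth_def Sk_Ln)
lemma smooth_holo: "f holomorphic_on UNIV \<Longrightarrow> smooth f" by (simp add: smooth_def Sk_holo)
lemma smooth_cnj: "smooth f \<Longrightarrow> smooth (\<lambda>z. cnj (f z))" by (simp add: smooth_def Sk_cnj)
lemma smooth_sum: "finite A \<Longrightarrow> (\<And>i. i \<in> A \<Longrightarrow> smooth (f i)) \<Longrightarrow> smooth (\<lambda>z. \<Sum>i\<in>A. f i z)"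
  by (simp add: smooth_def Sk_sum)
lemma smooth_prod: "finite A \<Longrightarrow> (\<And>i. i \<in> A \<Longrightarrow> smooth (f i)) \<Longrightarrow> smooth (\<lambda>z. \<Prod>i\<in>A. f i z)"
  by (simp add: smooth_def Sk_prod)
lemma smooth_p: "smooth f \<Longrightarrow> smooth (wirt_p f)"
  unfolding smooth_def
proof
  fix n assume "\<forall>n. Sk n f"
  then have "Sk (Suc n) f" by blast
  then show "Sk n (wirt_p f)" by simp
qed
lemma smooth_m: "smooth f \<Longrightarrow> smooth (wirt_m f)"
  unfolding smooth_def
proof
  fix n assume "\<forall>n. Sk n f"
  then have "Sk (Suc n) f" by blast
  then show "Sk n (wirt_m f)" by simp
qed
lemma smooth_hw: "smooth f \<Longrightarrow> hw f (wirt_p f z) (wirt_m f z) z"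
proof -
  assume "smooth f" then have "Sk (Suc 0) f" unfolding smooth_def by blast
  then show ?thesis by (rule Sk_hw)
qed
lemma smooth_comm: "smooth f \<Longrightarrow> wirt_p (wirt_m f) = wirt_m (wirt_p f)"
proof -
  assume "smooth f" then have "Sk (Suc 1) f" unfolding smooth_def by blast
  then show ?thesis by simp
qed
lemma smooth_diffble: "smooth f \<Longrightarrow> f differentiable (at z)"
  using hw_diff smooth_hw by blast


section \<open>Grassmann algebra basics\<close>

definition invs :: "'g::linorder set \<Rightarrow> 'g set \<Rightarrow> ('g \<times> 'g) set" where
  "invs A B = {(a, b). a \<in> A \<and> b \<in> B \<and> b < a}"

lemma merge_sign_invs: "merge_sign A B = (-1) ^ card (invs A B)"
  unfolding merge_sign_def invs_def by simp

lemma invs_sub: "invs A B \<subseteq> A \<times> B" unfolding invs_def by auto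

lemma finite_invs: "finite A \<Longrightarrow> finite B \<Longrightarrow> finite (invs A B)"
  using invs_sub finite_subset by blast

lemma ms_union_left:
  assumes "finite A" "finite B" "finite C" "A \<inter> B = {}"
  shows "merge_sign (A \<union> B) C = merge_sign A C * merge_sign B C"
proof -
  have "invs (A \<union> B) C = invs A C \<union> invs B C" unfolding invs_def by auto
  moreover have "invs A C \<inter> invs B C = {}" using assms(4) unfolding invs_def by auto
  ultimately have "card (invs (A \<union> B) C) = card (invs A C) + card (invs B C)"
    using assms by (simp add: card_Un_disjoint finite_invs)
  then show ?thesis unfolding merge_sign_invs by (simp add: power_add)
qed

lemma ms_union_right:
  assumes "finite A" "finite B" "finite C" "B \<inter> C = {}"
  shows "merge_sign A (B \<union> C) = merge_sign A B * merge_sign A C"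
proof -
  have "invs A (B \<union> C) = invs A B \<union> invs A C" unfolding invs_def by auto
  moreover have "invs A B \<inter> invs A C = {}" using assms(4) unfolding invs_def by auto
  ultimately have "card (invs A (B \<union> C)) = card (invs A B) + card (invs A C)"
    using assms by (simp add: card_Un_disjoint finite_invs)
  then show ?thesis unfolding merge_sign_invs by (simp add: power_add)
qed

lemma ms_swap:
  assumes "finite A" "finite B" "A \<inter> B = {}"
  shows "merge_sign A B * merge_sign B A = (-1) ^ (card A * card B)"
proof -
  have "A \<times> B = invs A B \<union> (\<lambda>(b, a). (a, b)) ` invs B A"
    using assms(3) unfolding invs_def by (auto simp: image_iff)
  moreover have "invs A B \<inter> (\<lambda>(b, a). (a, b)) ` invs B A = {}"
    unfolding invs_def by auto
  moreover have "card ((\<lambda>(b, a). (a, b)) ` invs B A) = card (invs B A)"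
    by (rule card_image) (auto simp: inj_on_def)
  ultimately have "card A * card B = card (invs A B) + card (invs B A)"
    using assms by (metis card_Un_disjoint card_cartesian_product finite_imageI finite_invs)
  then show ?thesis unfolding merge_sign_invs by (simp add: power_add)
qed

lemma ms_pm1: "merge_sign A B = 1 \<or> merge_sign A B = -1"
  unfolding merge_sign_def by (metis neg_one_even_power neg_one_odd_power)

lemma ms_empty[simp]: "merge_sign {} B = 1" "merge_sign A {} = 1"
  unfolding merge_sign_def by auto

lemma ms_sym_even:
  assumes "finite A" "finite B" "A \<inter> B = {}" "even (card A) \<or> even (card B)"
  shows "merge_sign A B = merge_sign B A"
proof -
  have "merge_sign A B * merge_sign B A = 1"
    using ms_swap[OF assms(1-3)] assms(4) by auto
  then show ?thesis using ms_pm1[of A B] ms_pm1[of B A] by auto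
qed

context
  fixes dummy :: "'g::{finite,linorder}"
begin
end

lemma sum_Pow_single:
  fixes S :: "'g::finite set"
  assumes "\<And>A. A \<subseteq> S \<Longrightarrow> A \<noteq> T \<Longrightarrow> f A = 0" "T \<subseteq> S"
  shows "(\<Sum>A\<in>Pow S. f A) = f T"
proof -
  have "(\<Sum>A\<in>Pow S. f A) = (\<Sum>A\<in>{T}. f A)"
    by (rule sum.mono_neutral_right) (use assms in auto)
  then show ?thesis by simp
qed

lemma gmul_gconst_left: "gmul (gconst c) (x :: 'g::{finite,linorder} grass) = gscale c x"
proof
  fix S :: "'g set"
  show "gmul (gconst c) x S = gscale c x S"
    unfolding gmul_def gscale_def
    by (subst sum_Pow_single[where T = "{}"]) (auto simp: gconst_def)
qed

lemma gmul_gconst_right: "gmul (x :: 'g::{finite,linorder} grass) (gconst c) = gscale c x"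
proof
  fix S :: "'g set"
  show "gmul x (gconst c) S = gscale c x S"
    unfolding gmul_def gscale_def
    by (subst sum_Pow_single[where T = S]) (auto simp: gconst_def)
qed

lemma gmul_assoc:
  fixes x y w :: "'g::{finite,linorder} grass"
  shows "gmul (gmul x y) w = gmul x (gmul y w)"
proof
  fix S :: "'g set"
  define PS where "PS = {(B, C). B \<subseteq> S \<and> C \<subseteq> S \<and> B \<inter> C = {}}"
  define G where "G = (\<lambda>(A, B). merge_sign A (S - A) * (merge_sign B (A - B) * x B * y (A - B)) * w (S - A))"
  define F where "F = (\<lambda>(B, C). merge_sign B C * merge_sign B (S - B - C) * merge_sign C (S - B - C)
       * x B * y C * w (S - B - C))"
  have L: "gmul (gmul x y) w S = sum F PS"
  proof -
    have "gmul (gmul x y) w S = (\<Sum>A\<in>Pow S. \<Sum>B\<in>Pow A.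
        merge_sign A (S - A) * (merge_sign B (A - B) * x B * y (A - B)) * w (S - A))"
      unfolding gmul_def by (simp add: sum_distrib_left sum_distrib_right)
    also have "\<dots> = sum G (Sigma (Pow S) Pow)"
      unfolding G_def by (rule sum.Sigma) auto
    also have "\<dots> = sum F PS"
    proof -
      have H: "F (B, A - B) = G (A, B)" if "B \<subseteq> A" "A \<subseteq> S" for A B
      proof -
        have e1: "S - B - (A - B) = S - A" "A = B \<union> (A - B)" using that by auto
        have "merge_sign A (S - A) = merge_sign B (S - A) * merge_sign (A - B) (S - A)"
          by (subst e1(2)) (intro ms_union_left, auto)
        then show ?thesis unfolding F_def G_def by (simp add: e1(1))
      qed
      show ?thesis
        by (rule sum.reindex_bij_witness[where i = "\<lambda>(B, C). (B \<union> C, B)" and j = "\<lambda>(A, B). (B, A - B)"])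
           (auto simp: PS_def H)
    qed
    finally show ?thesis .
  qed
  have R: "gmul x (gmul y w) S = sum F PS"
  proof -
    have "gmul x (gmul y w) S = (\<Sum>B\<in>Pow S. \<Sum>C\<in>Pow (S - B).
        merge_sign B (S - B) * x B * (merge_sign C (S - B - C) * y C * w (S - B - C)))"
      unfolding gmul_def by (simp add: sum_distrib_left sum_distrib_right)
    also have "\<dots> = (\<Sum>(B, C)\<in>Sigma (Pow S) (\<lambda>B. Pow (S - B)).
        merge_sign B (S - B) * x B * (merge_sign C (S - B - C) * y C * w (S - B - C)))"
      by (rule sum.Sigma) auto
    also have "Sigma (Pow S) (\<lambda>B. Pow (S - B)) = PS" unfolding PS_def by auto
    also have "(\<Sum>(B, C)\<in>PS. merge_sign B (S - B) * x B * (merge_sign C (S - B - C) * y C * w (S - B - C)))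
        = sum F PS"
    proof (rule sum.cong[OF refl])
      fix a assume "a \<in> PS"
      then obtain B C where a: "a = (B, C)" "B \<subseteq> S" "C \<subseteq> S" "B \<inter> C = {}" unfolding PS_def by auto
      have e: "S - B = C \<union> (S - B - C)" using a by auto
      have "merge_sign B (S - B) = merge_sign B C * merge_sign B (S - B - C)"
        by (subst e) (intro ms_union_right, auto)
      then show "(case a of (B, C) \<Rightarrow> merge_sign B (S - B) * x B * (merge_sign C (S - B - C) * y C * w (S - B - C))) = F a"
        unfolding a F_def by simp
    qed
    finally show ?thesis .
  qed
  show "gmul (gmul x y) w S = gmul x (gmul y w) S" using L R by simp
qed

lemma gmul_gadd_right: "gmul x (gadd y w) = gadd (gmul x y) (gmul x w)"
  unfolding gmul_def gadd_def by (auto simp: algebra_simps sum.distrib)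
lemma gmul_gadd_left: "gmul (gadd x y) w = gadd (gmul x w) (gmul y w)"
  unfolding gmul_def gadd_def by (auto simp: algebra_simps sum.distrib)
lemma gmul_gscale_right: "gmul x (gscale c y) = gscale c (gmul x y)"
  unfolding gmul_def gscale_def by (auto simp: algebra_simps sum_distrib_left)
lemma gmul_gscale_left: "gmul (gscale c x) y = gscale c (gmul x y)"
  unfolding gmul_def gscale_def by (auto simp: algebra_simps sum_distrib_left)

lemma gmul_nz:
  fixes x y :: "'g::{finite,linorder} grass"
  assumes "gmul x y S \<noteq> 0"
  obtains A where "A \<subseteq> S" "x A \<noteq> 0" "y (S - A) \<noteq> 0"
proof -
  from assms obtain A where "A \<in> Pow S" "merge_sign A (S - A) * x A * y (S - A) \<noteq> 0"
    unfolding gmul_def by (meson sum.neutral)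
  then show ?thesis using that by auto
qed

lemma gmul_parity:
  fixes x y :: "'g::{finite,linorder} grass"
  assumes "\<And>S. x S \<noteq> 0 \<Longrightarrow> odd (card S) = a" "\<And>S. y S \<noteq> 0 \<Longrightarrow> odd (card S) = b"
    "gmul x y S \<noteq> 0"
  shows "odd (card S) = (a \<noteq> b)"
proof -
  obtain A where A: "A \<subseteq> S" "x A \<noteq> 0" "y (S - A) \<noteq> 0" using gmul_nz[OF assms(3)] by blast
  have "card S = card A + card (S - A)" using A(1)
    by (metis card_Diff_subset card_mono diff_add_inverse le_add_diff_inverse finite)
  then show ?thesis using assms(1)[OF A(2)] assms(2)[OF A(3)] by auto
qed

lemma gmul_supp_left:
  fixes x y :: "'g::{finite,linorder} grass"
  assumes "\<And>S. x S \<noteq> 0 \<Longrightarrow> t \<in> S" "gmul x y S \<noteq> 0" shows "t \<in> S"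
  using gmul_nz[OF assms(2)] assms(1) by blast

lemma gmul_supp_right:
  fixes x y :: "'g::{finite,linorder} grass"
  assumes "\<And>S. y S \<noteq> 0 \<Longrightarrow> t \<in> S" "gmul x y S \<noteq> 0" shows "t \<in> S"
  using gmul_nz[OF assms(2)] assms(1) by blast

lemma gmul_supp_zero:
  fixes x y :: "'g::{finite,linorder} grass"
  assumes "\<And>S. x S \<noteq> 0 \<Longrightarrow> t \<in> S" "\<And>S. y S \<noteq> 0 \<Longrightarrow> t \<in> S"
  shows "gmul x y = (\<lambda>S. 0)"
proof
  fix S show "gmul x y S = 0"
  proof (rule ccontr)
    assume "gmul x y S \<noteq> 0"
    then obtain A where "A \<subseteq> S" "x A \<noteq> 0" "y (S - A) \<noteq> 0" by (rule gmul_nz)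
    then show False using assms by blast
  qed
qed

lemma gmul_comm_even:
  fixes x y :: "'g::{finite,linorder} grass"
  assumes "\<And>S. x S \<noteq> 0 \<Longrightarrow> even (card S)"
  shows "gmul x y = gmul y x"
proof
  fix S :: "'g set"
  have "gmul y x S = (\<Sum>A\<in>Pow S. merge_sign (S - A) (S - (S - A)) * y (S - A) * x (S - (S - A)))"
    unfolding gmul_def
    by (rule sum.reindex_bij_witness[where i = "\<lambda>A. S - A" and j = "\<lambda>A. S - A"])
       (auto simp: Diff_Diff_Int Int_absorb1 Int_absorb2)
  also have "\<dots> = (\<Sum>A\<in>Pow S. merge_sign A (S - A) * x A * y (S - A))"
  proof (rule sum.cong[OF refl])
    fix A assume A: "A \<in> Pow S"
    then have e: "S - (S - A) = A" by auto
    show "merge_sign (S - A) (S - (S - A)) * y (S - A) * x (S - (S - A)) = merge_sign A (S - A) * x A * y (S - A)"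
    proof (cases "x A = 0")
      case False
      then have "merge_sign (S - A) A = merge_sign A (S - A)"
        using assms[OF False] by (intro ms_sym_even) auto
      then show ?thesis unfolding e by simp
    qed (simp add: e)
  qed
  finally show "gmul x y S = gmul y x S" unfolding gmul_def by simp
qed

lemma gbody_gmul: "gbody (gmul x (y :: 'g::{finite,linorder} grass)) = gbody x * gbody y"
  unfolding gbody_def gmul_def by simp


definition evn :: "'g grass \<Rightarrow> bool" where
  "evn x \<longleftrightarrow> (\<forall>S. x S \<noteq> 0 \<longrightarrow> even (card S))"

typedef (overloaded) ('g::"{finite,linorder}") ev = "{x :: 'g grass. evn x}"
  morphisms R E
  by (rule exI[of _ "\<lambda>S. 0"]) (simp add: evn_def)

lemma evn_R: "evn (R x)" using R by auto
lemma RE: "evn x \<Longrightarrow> R (E x) = x" using E_inverse by auto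
lemma R_eqI: "R x = R y \<Longrightarrow> x = y" using R_inject by auto

lemma evn_zero: "evn (\<lambda>S. 0)" by (simp add: evn_def)
lemma evn_gconst: "evn (gconst c)" by (simp add: evn_def gconst_def)
lemma evn_gadd: "evn x \<Longrightarrow> evn y \<Longrightarrow> evn (gadd x y)"
  unfolding evn_def gadd_def by (metis add.right_neutral add_0)
lemma evn_gscale: "evn x \<Longrightarrow> evn (gscale c x)"
  unfolding evn_def gscale_def by auto
lemma evn_gmul: "evn x \<Longrightarrow> evn (gmul x (y :: 'g::{finite,linorder} grass))
   \<Longrightarrow> evn (gmul x y)" by simp
lemma evn_gmul': "evn x \<Longrightarrow> evn y \<Longrightarrow> evn (gmul x (y :: 'g::{finite,linorder} grass))"
  unfolding evn_def using gmul_parity[of x False y False] by auto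

instantiation ev :: ("{finite,linorder}") comm_ring_1
begin
definition zero_ev :: "'a ev" where "zero_ev = E (\<lambda>S. 0)"
definition one_ev :: "'a ev" where "one_ev = E (gconst 1)"
definition plus_ev :: "'a ev \<Rightarrow> 'a ev \<Rightarrow> 'a ev" where "plus_ev x y = E (gadd (R x) (R y))"
definition uminus_ev :: "'a ev \<Rightarrow> 'a ev" where "uminus_ev x = E (gscale (-1) (R x))"
definition minus_ev :: "'a ev \<Rightarrow> 'a ev \<Rightarrow> 'a ev" where "minus_ev x y = E (gadd (R x) (gscale (-1) (R y)))"
definition times_ev :: "'a ev \<Rightarrow> 'a ev \<Rightarrow> 'a ev" where "times_ev x y = E (gmul (R x) (R y))"

lemma R_zero: "R (0 :: 'a ev) = (\<lambda>S. 0)" unfolding zero_ev_def by (simp add: RE evn_zero)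
lemma R_one: "R (1 :: 'a ev) = gconst 1" unfolding one_ev_def by (simp add: RE evn_gconst)
lemma R_plus: "R (x + y :: 'a ev) = gadd (R x) (R y)" unfolding plus_ev_def by (simp add: RE evn_gadd evn_R)
lemma R_uminus: "R (- x :: 'a ev) = gscale (-1) (R x)" unfolding uminus_ev_def by (simp add: RE evn_gscale evn_R)
lemma R_minus: "R (x - y :: 'a ev) = gadd (R x) (gscale (-1) (R y))"
  unfolding minus_ev_def by (simp add: RE evn_gadd evn_gscale evn_R)
lemma R_times: "R (x * y :: 'a ev) = gmul (R x) (R y)" unfolding times_ev_def by (simp add: RE evn_gmul' evn_R)

instance
proof
  fix a b c :: "'a ev"
  show "a * b * c = a * (b * c)" by (rule R_eqI) (simp add: R_times gmul_assoc)
  show "a * b = b * a" by (rule R_eqI) (simp add: R_times gmul_comm_even evn_R[unfolded evn_def])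
  show "1 * a = a" by (rule R_eqI) (simp add: R_times R_one gmul_gconst_left gscale_def)
  show "(a + b) * c = a * c + b * c" by (rule R_eqI) (simp add: R_times R_plus gmul_gadd_left)
  show "a + b + c = a + (b + c)" by (rule R_eqI) (simp add: R_plus gadd_def add.assoc)
  show "a + b = b + a" by (rule R_eqI) (simp add: R_plus gadd_def add.commute)
  show "0 + a = a" by (rule R_eqI) (simp add: R_plus R_zero gadd_def)
  show "- a + a = 0" by (rule R_eqI) (simp add: R_plus R_zero R_uminus gadd_def gscale_def)
  show "a - b = a + - b" by (rule R_eqI) (simp add: R_plus R_minus R_uminus)
  show "(0 :: 'a ev) \<noteq> 1"
  proof
    assume "(0 :: 'a ev) = 1"
    then have "R (0 :: 'a ev) {} = R 1 {}" by simp
    then show False by (simp add: R_zero R_one gconst_def)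
  qed
qed
end

definition ec :: "complex \<Rightarrow> 'g::{finite,linorder} ev" where
  "ec c = E (gconst c)"

lemma R_ec: "R (ec c) = gconst c" unfolding ec_def by (simp add: RE evn_gconst)

lemma ec_add: "ec (a + b) = ec a + ec b"
  by (rule R_eqI) (simp add: R_ec R_plus gadd_def gconst_def fun_eq_iff)
lemma ec_mult: "ec (a * b) = ec a * ec b"
  by (rule R_eqI) (simp add: R_ec R_times gmul_gconst_left, simp add: gscale_def gconst_def fun_eq_iff)
lemma ec_0: "ec 0 = 0"
  by (rule R_eqI) (simp add: R_ec R_zero gconst_def fun_eq_iff)
lemma ec_1: "ec 1 = 1"
  by (rule R_eqI) (simp add: R_ec R_one)
lemma ec_uminus: "ec (- a) = - ec a"
  by (rule R_eqI) (simp add: R_ec R_uminus gscale_def gconst_def fun_eq_iff)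
lemma ec_diff: "ec (a - b) = ec a - ec b"
proof -
  have "ec (a + - b) = ec a + - ec b" by (simp only: ec_add ec_uminus)
  then show ?thesis by simp
qed
lemma gscale_R: "gscale c (R x) = R (ec c * x)"
  by (simp add: R_times R_ec gmul_gconst_left)

lemma R_sum: "finite A \<Longrightarrow> R (\<Sum>i\<in>A. f i) = gsum (\<lambda>i. R (f i)) A"
  by (induction A rule: finite_induct) (auto simp: R_zero R_plus gsum_def gadd_def)

lemma R_prod_list: "R (prod_list (map f xs)) = gprod_list (map (\<lambda>x. R (f x)) xs)"
  by (induction xs) (auto simp: R_one R_times gprod_list_def)

lemma R_power: "R (x ^ k) = gpow (R x) k"
  by (induction k) (auto simp: R_one R_times gpow_def)

lemma gbody_R_mult: "gbody (R (x * y)) = gbody (R x) * gbody (R y)"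
  by (simp add: R_times gbody_gmul)
lemma gbody_R_add: "gbody (R (x + y)) = gbody (R x) + gbody (R y)"
  by (simp add: R_plus gbody_def gadd_def)
lemma gbody_R_ec: "gbody (R (ec c)) = c"
  by (simp add: R_ec gbody_def gconst_def)


datatype 'a dn = DN 'a 'a 'a

instantiation dn :: (comm_ring_1) comm_ring_1
begin
fun plus_dn :: "'a dn \<Rightarrow> 'a dn \<Rightarrow> 'a dn" where
  "plus_dn (DN a b c) (DN a' b' c') = DN (a + a') (b + b') (c + c')"
fun minus_dn :: "'a dn \<Rightarrow> 'a dn \<Rightarrow> 'a dn" where
  "minus_dn (DN a b c) (DN a' b' c') = DN (a - a') (b - b') (c - c')"
fun uminus_dn :: "'a dn \<Rightarrow> 'a dn" where
  "uminus_dn (DN a b c) = DN (- a) (- b) (- c)"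
fun times_dn :: "'a dn \<Rightarrow> 'a dn \<Rightarrow> 'a dn" where
  "times_dn (DN a b c) (DN a' b' c') = DN (a * a') (a * b' + b * a') (a * c' + c * a')"
definition zero_dn :: "'a dn" where "zero_dn = DN 0 0 0"
definition one_dn :: "'a dn" where "one_dn = DN 1 0 0"
instance
proof
  fix a b c :: "'a dn"
  show "a * b * c = a * (b * c)" by (cases a; cases b; cases c) (simp add: algebra_simps)
  show "a * b = b * a" by (cases a; cases b) (simp add: algebra_simps)
  show "1 * a = a" by (cases a) (simp add: one_dn_def)
  show "(a + b) * c = a * c + b * c" by (cases a; cases b; cases c) (simp add: algebra_simps)
  show "a + b + c = a + (b + c)" by (cases a; cases b; cases c) (simp add: algebra_simps)
  show "a + b = b + a" by (cases a; cases b) (simp add: algebra_simps)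
  show "0 + a = a" by (cases a) (simp add: zero_dn_def)
  show "- a + a = 0" by (cases a) (simp add: zero_dn_def)
  show "a - b = a + - b" by (cases a; cases b) simp
  show "(0 :: 'a dn) \<noteq> 1" by (simp add: zero_dn_def one_dn_def)
qed
end

lemma dn_zero: "0 = DN 0 0 0" by (simp add: zero_dn_def)
lemma dn_one: "1 = DN 1 0 0" by (simp add: one_dn_def)

definition rh :: "('a::comm_ring_1 \<Rightarrow> 'b::comm_ring_1) \<Rightarrow> bool" where
  "rh \<phi> \<longleftrightarrow> \<phi> 0 = 0 \<and> \<phi> 1 = 1 \<and> (\<forall>x y. \<phi> (x + y) = \<phi> x + \<phi> y) \<and> (\<forall>x y. \<phi> (x * y) = \<phi> x * \<phi> y)"

lemma rh_add: "rh \<phi> \<Longrightarrow> \<phi> (x + y) = \<phi> x + \<phi> y" unfolding rh_def by blast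
lemma rh_mult: "rh \<phi> \<Longrightarrow> \<phi> (x * y) = \<phi> x * \<phi> y" unfolding rh_def by blast
lemma rh_0: "rh \<phi> \<Longrightarrow> \<phi> 0 = 0" unfolding rh_def by blast
lemma rh_1: "rh \<phi> \<Longrightarrow> \<phi> 1 = 1" unfolding rh_def by blast
lemma rh_uminus: "rh \<phi> \<Longrightarrow> \<phi> (- x) = - \<phi> x"
proof -
  assume h: "rh \<phi>"
  have "\<phi> (- x) + \<phi> x = 0" using rh_add[OF h, of "-x" x] rh_0[OF h] by simp
  then show ?thesis by (simp add: eq_neg_iff_add_eq_0)
qed
lemma rh_diff: "rh \<phi> \<Longrightarrow> \<phi> (x - y) = \<phi> x - \<phi> y"
  using rh_add[of \<phi> x "-y"] rh_uminus[of \<phi> y] by simp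
lemma rh_power: "rh \<phi> \<Longrightarrow> \<phi> (x ^ k) = \<phi> x ^ k"
  by (induction k) (auto simp: rh_1 rh_mult)

fun dnemb :: "('a \<Rightarrow> 'b::comm_ring_1) \<Rightarrow> 'b \<Rightarrow> 'b \<Rightarrow> 'a dn \<Rightarrow> 'b" where
  "dnemb \<phi> u v (DN a b c) = \<phi> a + \<phi> b * u + \<phi> c * v"

lemma rh_dnemb:
  assumes "rh \<phi>" "u * u = 0" "u * v = 0" "v * v = 0"
  shows "rh (dnemb \<phi> u v)"
  unfolding rh_def
proof (intro conjI allI)
  show "dnemb \<phi> u v 0 = 0" "dnemb \<phi> u v 1 = 1"
    using assms(1) by (simp_all add: dn_zero dn_one rh_0 rh_1)
  fix x y :: "'a dn"
  show "dnemb \<phi> u v (x + y) = dnemb \<phi> u v x + dnemb \<phi> u v y"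
    using assms(1) by (cases x; cases y) (simp add: rh_add algebra_simps)
  have vu: "v * u = 0" using assms(3) by (simp add: mult.commute)
  show "dnemb \<phi> u v (x * y) = dnemb \<phi> u v x * dnemb \<phi> u v y"
  proof (cases x; cases y)
    fix a b c a' b' c' assume xy: "x = DN a b c" "y = DN a' b' c'"
    have "dnemb \<phi> u v x * dnemb \<phi> u v y =
       \<phi> a * \<phi> a' + (\<phi> a * \<phi> b' + \<phi> b * \<phi> a') * u + (\<phi> a * \<phi> c' + \<phi> c * \<phi> a') * v
       + \<phi> b * \<phi> b' * (u * u) + (\<phi> b * \<phi> c' + \<phi> c * \<phi> b') * (u * v) + \<phi> c * \<phi> c' * (v * v)"
      unfolding xy by (simp add: algebra_simps)
    also have "\<dots> = dnemb \<phi> u v (x * y)"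
      unfolding xy using assms by (simp add: rh_add rh_mult)
    finally show ?thesis by simp
  qed
qed

text \<open>The 9-dimensional algebra T = complex dn dn\<close>

definition cT :: "complex \<Rightarrow> complex dn dn" where "cT c = DN (DN c 0 0) 0 0"

fun bodyT :: "complex dn dn \<Rightarrow> complex" where
  "bodyT (DN (DN a _ _) _ _) = a"

lemma cube_zero:
  assumes "bodyT s = 0" shows "s ^ 3 = 0"
proof -
  obtain a b c B C where s: "s = DN (DN a b c) B C" by (metis dn.exhaust)
  have "a = 0" using assms s by simp
  then show ?thesis unfolding s by (cases B; cases C) (simp add: power3_eq_cube dn_zero algebra_simps)
qed

lemma pow_zero_ge3: "(s :: 'a :: comm_ring_1) ^ 3 = 0 \<Longrightarrow> k \<ge> 3 \<Longrightarrow> s ^ k = 0"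
  by (metis le_add_diff_inverse mult_zero_left power_add)

section \<open>ln and inv on ev for elements with cube-zero soul\<close>

lemma sum_upto_card:
  fixes f :: "nat \<Rightarrow> 'a::comm_monoid_add"
  assumes "n \<ge> 2" "\<And>k. k \<ge> 3 \<Longrightarrow> f k = 0"
  shows "(\<Sum>k\<in>{1..n}. f k) = f 1 + f 2"
proof -
  have "(\<Sum>k\<in>{1..n}. f k) = (\<Sum>k\<in>{1,2}. f k)"
    by (rule sum.mono_neutral_right) (use assms in auto)
  then show ?thesis by simp
qed

lemma sum_0upto_card:
  fixes f :: "nat \<Rightarrow> 'a::comm_monoid_add"
  assumes "n \<ge> 2" "\<And>k. k \<ge> 3 \<Longrightarrow> f k = 0"
  shows "(\<Sum>k\<in>{0..n}. f k) = f 0 + f 1 + f 2"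
proof -
  have "(\<Sum>k\<in>{0..n}. f k) = (\<Sum>k\<in>{0,1,2}. f k)"
    by (rule sum.mono_neutral_right) (use assms in auto)
  then show ?thesis by (simp add: add.assoc)
qed

lemma gsoul_R:
  assumes "gbody (R s) = 0"
  shows "gsoul (R (ec b + s)) = R s"
proof
  fix S show "gsoul (R (ec b + s)) S = R s S"
    using assms by (auto simp: gsoul_def R_plus R_ec gadd_def gconst_def gbody_def)
qed

lemma gln_ev:
  fixes s :: "'g::{finite,linorder} ev"
  assumes "gbody (R s) = 0" "s ^ 3 = 0" "CARD('g) \<ge> 2"
  shows "gln (R (ec b + s)) = R (ec (Ln b) + ec (1 / b) * s - ec (1 / (2 * b^2)) * s^2)"
proof -
  have bd: "gbody (R (ec b + s)) = b" using assms(1) by (simp add: gbody_R_add gbody_R_ec)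
  have "gsum (\<lambda>k. gscale ((-1) ^ (k + 1) / (of_nat k * b ^ k)) (gpow (R s) k)) {1..CARD('g)}
      = R (\<Sum>k\<in>{1..CARD('g)}. ec ((-1) ^ (k + 1) / (of_nat k * b ^ k)) * s ^ k)"
    by (simp add: R_sum gscale_R R_power[symmetric])
  also have "(\<Sum>k\<in>{1..CARD('g)}. ec ((-1) ^ (k + 1) / (of_nat k * b ^ k)) * s ^ k)
      = ec (1 / b) * s + ec (- 1 / (2 * b^2)) * s^2"
    by (subst sum_upto_card[OF assms(3)]) (auto simp: pow_zero_ge3[OF assms(2)])
  finally show ?thesis
    unfolding gln_def bd gsoul_R[OF assms(1)]
    by (simp add: R_plus R_minus R_ec ec_uminus gscale_R[symmetric] gscale_def gadd_def fun_eq_iff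
         R_times gmul_gconst_left)
qed

lemma ginv_ev:
  fixes s :: "'g::{finite,linorder} ev"
  assumes "gbody (R s) = 0" "s ^ 3 = 0" "CARD('g) \<ge> 2"
  shows "ginv (R (ec b + s)) = R (ec (1 / b) - ec (1 / b^2) * s + ec (1 / b^3) * s^2)"
proof -
  have bd: "gbody (R (ec b + s)) = b" using assms(1) by (simp add: gbody_R_add gbody_R_ec)
  have "gsum (\<lambda>k. gscale ((-1) ^ k / b ^ (k + 1)) (gpow (R s) k)) {0..CARD('g)}
      = R (\<Sum>k\<in>{0..CARD('g)}. ec ((-1) ^ k / b ^ (k + 1)) * s ^ k)"
    by (simp add: R_sum gscale_R R_power[symmetric])
  also have "(\<Sum>k\<in>{0..CARD('g)}. ec ((-1) ^ k / b ^ (k + 1)) * s ^ k)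
      = ec (1 / b) + ec (- 1 / b^2) * s + ec (1 / b^3) * s^2"
    by (subst sum_0upto_card[OF assms(3)]) (auto simp: pow_zero_ge3[OF assms(2)] ec_1 numeral_2_eq_2 numeral_3_eq_3)
  finally show ?thesis
    unfolding ginv_def bd gsoul_R[OF assms(1)]
    by (simp add: R_minus R_plus R_times ec_uminus)
qed


definition LiftT :: "complex \<Rightarrow> complex \<Rightarrow> complex \<Rightarrow> complex \<Rightarrow> complex dn dn" where
  "LiftT a b c d = DN (DN a b 0) (DN c d 0) (DN 0 0 0)"

definition JT :: "complex \<Rightarrow> complex dn dn" where
  "JT t = DN (DN 1 0 t) (DN 0 0 0) (DN t 0 (t * t))"

lemma T_ln_identity:
  assumes "g \<noteq> 0"
  shows "cT (Ln g) + cT (1 / g) * (LiftT g a b d * JT t - cT g) - cT (1 / (2 * g^2)) * (LiftT g a b d * JT t - cT g)^2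
    = LiftT (Ln g) (a / g) (b / g) (d / g - a * b / g^2) + DN (DN 0 0 t) (DN 0 0 0) (DN t 0 0)"
  using assms unfolding LiftT_def JT_def cT_def
  by (simp add: power2_eq_square dn_zero field_simps)

lemma T_inv_identity: "LiftT g a b d * JT t - cT g = DN (DN 0 a (g*t)) (DN b d (b*t)) (DN (g*t) (a*t) (g*t*t))"
  unfolding LiftT_def JT_def cT_def by (simp add: dn_zero algebra_simps)

section \<open>Derivatives of ev-valued functions\<close>

definition wop :: "bool \<Rightarrow> (complex \<Rightarrow> complex) \<Rightarrow> complex \<Rightarrow> complex" where
  "wop b f = (if b then wirt_p f else wirt_m f)"

lemma hw_wop: "hw f a c z \<Longrightarrow> wop b f z = (if b then a else c)"
  unfolding wop_def using hw_wirt by auto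

lemma wop_const: "wop b (\<lambda>z. c) = (\<lambda>z. 0)" unfolding wop_def by simp

definition dW :: "bool \<Rightarrow> (complex \<Rightarrow> 'g::{finite,linorder} ev) \<Rightarrow> complex \<Rightarrow> 'g ev" where
  "dW b F z = E (\<lambda>S. wop b (\<lambda>w. R (F w) S) z)"

lemma evn_wop: "evn (\<lambda>S. wop b (\<lambda>w. R (F w) S) z)"
proof -
  have "wop b (\<lambda>w. R (F w) S) z = 0" if "odd (card S)" for S
  proof -
    have "(\<lambda>w. R (F w) S) = (\<lambda>w. 0)" using evn_R that unfolding evn_def by auto
    then show ?thesis by (simp add: wop_const)
  qed
  then show ?thesis unfolding evn_def by auto
qed

lemma R_dW: "R (dW b F z) = (\<lambda>S. wop b (\<lambda>w. R (F w) S) z)"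
  unfolding dW_def by (simp add: RE evn_wop)

lemma sd_p_R: "sd_p (\<lambda>w. R (F w)) z = R (dW True F z)"
  unfolding R_dW sd_p_def wop_def by simp
lemma sd_m_R: "sd_m (\<lambda>w. R (F w)) z = R (dW False F z)"
  unfolding R_dW sd_m_def wop_def by simp

definition esm :: "(complex \<Rightarrow> 'g::{finite,linorder} ev) \<Rightarrow> bool" where
  "esm F \<longleftrightarrow> (\<forall>S. smooth (\<lambda>z. R (F z) S))"

lemma hw_sum: "finite A \<Longrightarrow> (\<And>i. i \<in> A \<Longrightarrow> hw (f i) (a i) (c i) z) \<Longrightarrow>
   hw (\<lambda>z. \<Sum>i\<in>A. f i z) (\<Sum>i\<in>A. a i) (\<Sum>i\<in>A. c i) z"
proof (induction A rule: finite_induct)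
  case empty then show ?case using hw_const[of 0 z] by simp
next
  case (insert x A) then show ?case by (simp add: hw_add)
qed

lemma R_times_apply: "R (x * y) S = (\<Sum>A\<in>Pow S. merge_sign A (S - A) * R x A * R y (S - A))"
  by (simp add: R_times gmul_def)

lemma esm_ec: "smooth f \<Longrightarrow> esm (\<lambda>z. ec (f z))"
  unfolding esm_def R_ec gconst_def
proof
  fix S assume "smooth f"
  then show "smooth (\<lambda>z. if S = {} then f z else 0)" by (cases "S = {}") (simp_all add: smooth_const)
qed
lemma esm_const: "esm (\<lambda>z. c)"
  unfolding esm_def by (simp add: smooth_const)
lemma esm_add: "esm F \<Longrightarrow> esm G \<Longrightarrow> esm (\<lambda>z. F z + G z)"
  unfolding esm_def R_plus gadd_def by (auto intro: smooth_add)
lemma esm_mult: "esm F \<Longrightarrow> esm G \<Longrightarrow> esm (\<lambda>z. F z * G z)"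
  unfolding esm_def R_times_apply by (auto intro!: smooth_sum smooth_mult smooth_const)
lemma esm_dW: "esm F \<Longrightarrow> esm (dW b F)"
  unfolding esm_def R_dW wop_def by (auto intro: smooth_p smooth_m)

lemma dW_add: "esm F \<Longrightarrow> esm G \<Longrightarrow> dW b (\<lambda>z. F z + G z) z = dW b F z + dW b G z"
proof (rule R_eqI, rule ext)
  fix S assume F: "esm F" and G: "esm G"
  have "hw (\<lambda>w. R (F w) S + R (G w) S) (wirt_p (\<lambda>w. R (F w) S) z + wirt_p (\<lambda>w. R (G w) S) z)
     (wirt_m (\<lambda>w. R (F w) S) z + wirt_m (\<lambda>w. R (G w) S) z) z" (is "hw ?h _ _ _")
    using F G unfolding esm_def by (intro hw_add smooth_hw) auto
  note H = hw_wirt[OF this]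
  show "R (dW b (\<lambda>z. F z + G z) z) S = R (dW b F z + dW b G z) S"
    unfolding R_dW R_plus gadd_def wop_def using H by simp
qed

lemma dW_mult: "esm F \<Longrightarrow> esm G \<Longrightarrow> dW b (\<lambda>z. F z * G z) z = dW b F z * G z + F z * dW b G z"
proof (rule R_eqI, rule ext)
  fix S :: "'a set" assume F: "esm F" and G: "esm G"
  let ?m = "\<lambda>A. merge_sign A (S - A)"
  let ?f = "\<lambda>A w. R (F w) A" and ?g = "\<lambda>A w. R (G w) A"
  have "hw (\<lambda>w. \<Sum>A\<in>Pow S. ?m A * ?f A w * ?g (S - A) w)
      (\<Sum>A\<in>Pow S. ?m A * wirt_p (?f A) z * ?g (S - A) z + ?m A * ?f A z * wirt_p (?g (S - A)) z)
      (\<Sum>A\<in>Pow S. ?m A * wirt_m (?f A) z * ?g (S - A) z + ?m A * ?f A z * wirt_m (?g (S - A)) z) z"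
  proof (rule hw_sum)
    fix A
    have "hw (\<lambda>w. ?m A * ?f A w * ?g (S - A) w)
      ((?m A * wirt_p (?f A) z) * ?g (S - A) z + (?m A * ?f A z) * wirt_p (?g (S - A)) z)
      ((?m A * wirt_m (?f A) z) * ?g (S - A) z + (?m A * ?f A z) * wirt_m (?g (S - A)) z) z"
      using F G unfolding esm_def by (intro hw_mult hw_cmult smooth_hw) auto
    then show "hw (\<lambda>w. ?m A * ?f A w * ?g (S - A) w)
      (?m A * wirt_p (?f A) z * ?g (S - A) z + ?m A * ?f A z * wirt_p (?g (S - A)) z)
      (?m A * wirt_m (?f A) z * ?g (S - A) z + ?m A * ?f A z * wirt_m (?g (S - A)) z) z"
      by (simp add: algebra_simps)
  qed simp
  note H = hw_wirt[OF this]
  show "R (dW b (\<lambda>z. F z * G z) z) S = R (dW b F z * G z + F z * dW b G z) S"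
    unfolding R_dW R_plus gadd_def R_times_apply wop_def using H
    by (simp add: sum.distrib algebra_simps)
qed

lemma dW_ec: "smooth f \<Longrightarrow> dW b (\<lambda>z. ec (f z)) z = ec (wop b f z)"
proof (rule R_eqI, rule ext)
  fix S :: "'a set" assume f: "smooth f"
  show "R (dW b (\<lambda>z. ec (f z)) z) S = R (ec (wop b f z)) S"
    unfolding R_dW R_ec gconst_def by (auto simp: wop_const)
qed

lemma dW_const: "dW b (\<lambda>z. c) z = 0"
  by (rule R_eqI) (simp add: R_dW R_zero wop_const)

definition hol :: "(complex \<Rightarrow> 'g::{finite,linorder} ev) \<Rightarrow> bool" where
  "hol F \<longleftrightarrow> (\<forall>S. (\<lambda>z. R (F z) S) holomorphic_on UNIV)"
definition ahol :: "(complex \<Rightarrow> 'g::{finite,linorder} ev) \<Rightarrow> bool" where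
  "ahol F \<longleftrightarrow> (\<forall>S. \<exists>h. h holomorphic_on UNIV \<and> (\<forall>z. R (F z) S = cnj (h z)))"

lemma hol_esm: "hol F \<Longrightarrow> esm F"
  unfolding hol_def esm_def by (auto intro: smooth_holo)
lemma ahol_esm: "ahol F \<Longrightarrow> esm F"
  unfolding ahol_def esm_def
proof (intro allI)
  fix S assume "\<forall>S. \<exists>h. h holomorphic_on UNIV \<and> (\<forall>z. R (F z) S = cnj (h z))"
  then obtain h where "h holomorphic_on UNIV" "\<And>z. R (F z) S = cnj (h z)" by blast
  then show "smooth (\<lambda>z. R (F z) S)" by (simp add: smooth_cnj smooth_holo)
qed

lemma hol_dM: "hol F \<Longrightarrow> dW False F z = 0"
  by (rule R_eqI) (simp add: R_dW R_zero wop_def hol_def wirt_entire)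
lemma hol_dP: "hol F \<Longrightarrow> hol (dW True F)"
  unfolding hol_def R_dW wop_def by (simp add: wirt_entire holomorphic_deriv)
lemma ahol_dP: "ahol F \<Longrightarrow> dW True F z = 0"
proof (rule R_eqI, rule ext)
  fix S assume "ahol F"
  then obtain h where h: "h holomorphic_on UNIV" "\<And>z. R (F z) S = cnj (h z)" unfolding ahol_def by blast
  have d: "h differentiable (at z)" using hw_diff[OF hw_entire[OF h(1)]] .
  show "R (dW True F z) S = R 0 S"
    unfolding R_dW R_zero wop_def using wirt_cnj[OF d] wirt_entire[OF h(1)] by (simp add: h(2))
qed
lemma ahol_dM: "ahol F \<Longrightarrow> ahol (dW False F)"
  unfolding ahol_def
proof (intro allI)
  fix S assume "\<forall>S. \<exists>h. h holomorphic_on UNIV \<and> (\<forall>z. R (F z) S = cnj (h z))"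
  then obtain h where h: "h holomorphic_on UNIV" "\<And>z. R (F z) S = cnj (h z)" by blast
  have d: "h differentiable (at z)" for z using hw_diff[OF hw_entire[OF h(1)]] .
  have "R (dW False F z) S = cnj (deriv h z)" for z
    unfolding R_dW wop_def using wirt_cnj[OF d] wirt_entire[OF h(1)] by (simp add: h(2))
  then show "\<exists>h. h holomorphic_on UNIV \<and> (\<forall>z. R (dW False F z) S = cnj (h z))"
    using holomorphic_deriv[OF h(1)] by auto
qed


lemma gen_supp: "gen a S \<noteq> 0 \<Longrightarrow> a \<in> S" unfolding gen_def by (auto split: if_splits)
lemma gen_par: "gen a S \<noteq> 0 \<Longrightarrow> odd (card S) = True" unfolding gen_def by (auto split: if_splits)

lemma rh_ec: "rh ec"
  unfolding rh_def by (simp add: ec_0 ec_1 ec_add ec_mult)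

locale susy =
  fixes \<theta>p \<theta>m :: "'g::{finite,linorder}" and \<sigma> :: "'g \<Rightarrow> 'g" and \<eta> :: "complex \<Rightarrow> 'g grass"
  assumes theta_distinct: "\<theta>p \<noteq> \<theta>m"
    and sigma_inv: "\<And>a. \<sigma> (\<sigma> a) = a"
    and sigma_theta: "\<sigma> \<theta>p = \<theta>m"
    and eta_holo: "\<And>S. (\<lambda>z. \<eta> z S) holomorphic_on UNIV"
    and eta_odd: "\<And>z S. \<eta> z S \<noteq> 0 \<Longrightarrow> odd (card S)"
begin

definition P :: "complex \<Rightarrow> 'g grass" where "P z = gscale \<i> (gmul (gen \<theta>p) (\<eta> z))"
definition Q :: "complex \<Rightarrow> 'g grass" where "Q z = gconj \<sigma> (P z)"

lemma P_supp: "P z S \<noteq> 0 \<Longrightarrow> \<theta>p \<in> S"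
  unfolding P_def gscale_def using gmul_supp_left[OF gen_supp] by auto

lemma P_even: "evn (P z)"
  unfolding evn_def P_def gscale_def
  using gmul_parity[of "gen \<theta>p" True "\<eta> z" True] gen_par eta_odd by fastforce

lemma P_holo: "(\<lambda>z. P z S) holomorphic_on UNIV"
  unfolding P_def gscale_def gmul_def
  by (intro holomorphic_intros holomorphic_on_sum eta_holo)

lemma inj_sigma: "inj \<sigma>" by (metis injI sigma_inv)

lemma Q_apply: "Q z T = (-1) ^ card {(a, b). a \<in> \<sigma> ` T \<and> b \<in> \<sigma> ` T \<and> a < b \<and> \<sigma> a < \<sigma> b} * cnj (P z (\<sigma> ` T))"
  unfolding Q_def gconj_def by (simp add: Let_def)

lemma Q_supp: "Q z T \<noteq> 0 \<Longrightarrow> \<theta>m \<in> T"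
proof -
  assume "Q z T \<noteq> 0"
  then have "P z (\<sigma> ` T) \<noteq> 0" unfolding Q_apply by auto
  then have "\<theta>p \<in> \<sigma> ` T" by (rule P_supp)
  then obtain t where "t \<in> T" "\<sigma> t = \<theta>p" by auto
  then show ?thesis using sigma_inv[of t] sigma_theta by auto
qed

lemma Q_even: "evn (Q z)"
  unfolding evn_def
proof (intro allI impI)
  fix T assume "Q z T \<noteq> 0"
  then have "P z (\<sigma> ` T) \<noteq> 0" unfolding Q_apply by auto
  then have "even (card (\<sigma> ` T))" using P_even unfolding evn_def by auto
  moreover have "card (\<sigma> ` T) = card T" using inj_sigma by (simp add: card_image inj_on_subset)
  ultimately show "even (card T)" by simp
qed

definition p :: "complex \<Rightarrow> 'g ev" where "p z = E (P z)"
definition q :: "complex \<Rightarrow> 'g ev" where "q z = E (Q z)"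
definition p' :: "complex \<Rightarrow> 'g ev" where "p' = dW True p"
definition q' :: "complex \<Rightarrow> 'g ev" where "q' = dW False q"

lemma R_p: "R (p z) = P z" unfolding p_def by (simp add: RE P_even)
lemma R_q: "R (q z) = Q z" unfolding q_def by (simp add: RE Q_even)

lemma hol_p: "hol p" unfolding hol_def R_p using P_holo by blast
lemma ahol_q: "ahol q"
  unfolding ahol_def R_q
proof
  fix T
  let ?s = "(-1) ^ card {(a, b). a \<in> \<sigma> ` T \<and> b \<in> \<sigma> ` T \<and> a < b \<and> \<sigma> a < \<sigma> b} :: complex"
  have "cnj ?s = ?s" by simp
  then have "Q z T = cnj (?s * P z (\<sigma> ` T))" for z unfolding Q_apply by simp
  moreover have "(\<lambda>z. ?s * P z (\<sigma> ` T)) holomorphic_on UNIV"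
    by (intro holomorphic_intros P_holo)
  ultimately show "\<exists>h. h holomorphic_on UNIV \<and> (\<forall>z. Q z T = cnj (h z))" by blast
qed

lemma hol_p': "hol p'" unfolding p'_def by (rule hol_dP[OF hol_p])
lemma ahol_q': "ahol q'" unfolding q'_def by (rule ahol_dM[OF ahol_q])

lemma esm_p: "esm p" by (rule hol_esm[OF hol_p])
lemma esm_p': "esm p'" by (rule hol_esm[OF hol_p'])
lemma esm_q: "esm q" by (rule ahol_esm[OF ahol_q])
lemma esm_q': "esm q'" by (rule ahol_esm[OF ahol_q'])

lemma p_supp: "R (p z) S \<noteq> 0 \<Longrightarrow> \<theta>p \<in> S" unfolding R_p by (rule P_supp)
lemma q_supp: "R (q z) S \<noteq> 0 \<Longrightarrow> \<theta>m \<in> S" unfolding R_q by (rule Q_supp)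

lemma dW_supp:
  assumes "\<And>w. R (F w) S \<noteq> 0 \<Longrightarrow> t \<in> S"
  shows "R (dW b F z) S \<noteq> 0 \<Longrightarrow> t \<in> S"
proof (rule ccontr)
  assume a: "R (dW b F z) S \<noteq> 0" "t \<notin> S"
  then have "(\<lambda>w. R (F w) S) = (\<lambda>w. 0)" using assms by auto
  then show False using a(1) unfolding R_dW by (simp add: wop_const)
qed

lemma p'_supp: "R (p' z) S \<noteq> 0 \<Longrightarrow> \<theta>p \<in> S" unfolding p'_def by (rule dW_supp[OF p_supp])
lemma q'_supp: "R (q' z) S \<noteq> 0 \<Longrightarrow> \<theta>m \<in> S" unfolding q'_def by (rule dW_supp[OF q_supp])

lemma ev_supp_zero:
  assumes "\<And>S. R x S \<noteq> 0 \<Longrightarrow> t \<in> S" "\<And>S. R y S \<noteq> 0 \<Longrightarrow> t \<in> S"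
  shows "x * y = 0"
  by (rule R_eqI) (simp add: R_times R_zero gmul_supp_zero[OF assms])

lemmas rels = ev_supp_zero[OF p_supp p_supp] ev_supp_zero[OF p_supp p'_supp]
  ev_supp_zero[OF p'_supp p'_supp] ev_supp_zero[OF q_supp q_supp]
  ev_supp_zero[OF q_supp q'_supp] ev_supp_zero[OF q'_supp q'_supp]

lemma ev_body_zero:
  assumes "\<And>S. R x S \<noteq> 0 \<Longrightarrow> t \<in> S" shows "gbody (R x) = 0"
  using assms unfolding gbody_def by auto

lemmas bodies = ev_body_zero[OF p_supp] ev_body_zero[OF p'_supp]
  ev_body_zero[OF q_supp] ev_body_zero[OF q'_supp]

definition \<Phi> :: "complex \<Rightarrow> complex dn dn \<Rightarrow> 'g ev" where
  "\<Phi> z = dnemb (dnemb ec (p z) (p' z)) (q z) (q' z)"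

lemma rh_\<Phi>1: "rh (dnemb ec (p z) (p' z))"
  by (rule rh_dnemb[OF rh_ec]) (simp_all add: rels)

lemma rh_\<Phi>: "rh (\<Phi> z)"
  unfolding \<Phi>_def by (rule rh_dnemb[OF rh_\<Phi>1]) (simp_all add: rels)

lemma gbody_\<Phi>: "gbody (R (\<Phi> z X)) = bodyT X"
proof -
  obtain a b c B C where X: "X = DN (DN a b c) B C" by (metis dn.exhaust)
  show ?thesis unfolding X \<Phi>_def
    by (simp add: gbody_R_add gbody_R_mult gbody_R_ec bodies)
qed

lemma \<Phi>_cT: "\<Phi> z (cT c) = ec c"
  unfolding \<Phi>_def cT_def by (simp add: ec_0 dn_zero)

end


definition L :: "(complex \<Rightarrow> complex) \<Rightarrow> complex \<Rightarrow> complex dn dn" where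
  "L f z = LiftT (f z) (wirt_p f z) (wirt_m f z) (wirt_p (wirt_m f) z)"

context susy
begin

lemma \<Phi>_LiftT: "\<Phi> z (LiftT a b c d) = ec a + ec b * p z + (ec c + ec d * p z) * q z"
  unfolding \<Phi>_def LiftT_def by (simp add: ec_0)

lemma \<Phi>_LJ: "\<Phi> z (LiftT a b c d * JT 1) =
   ec a + ec b * p z + ec a * p' z + (ec c + ec d * p z + ec c * p' z) * q z
   + (ec a + ec b * p z + ec a * p' z) * q' z"
  unfolding \<Phi>_def LiftT_def JT_def by (simp add: ec_0)

lemma K1:
  assumes f: "smooth f"
  shows "dW True (dW False (\<lambda>w. \<Phi> w (L f w))) z = \<Phi> z (L (wirt_p (wirt_m f)) z * JT 1)"
proof -
  define fp where "fp = wirt_p f"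
  define fm where "fm = wirt_m f"
  define fpm where "fpm = wirt_p (wirt_m f)"
  have sm: "smooth fp" "smooth fm" "smooth fpm" "smooth (wirt_m fp)" "smooth (wirt_m fm)" "smooth (wirt_m fpm)"
    unfolding fp_def fm_def fpm_def using f by (auto intro!: smooth_p smooth_m)
  have e0: "(\<lambda>w. \<Phi> w (L f w)) = (\<lambda>w. ec (f w) + ec (fp w) * p w + (ec (fm w) + ec (fpm w) * p w) * q w)"
    unfolding L_def \<Phi>_LiftT fp_def fm_def fpm_def by simp
  have dMp: "dW False p w = 0" for w by (rule hol_dM[OF hol_p])
  have dPq: "dW True q w = 0" for w by (rule ahol_dP[OF ahol_q])
  have dPq': "dW True q' w = 0" for w by (rule ahol_dP[OF ahol_q'])
  have dMq: "dW False q = q'" unfolding q'_def ..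
  have dPp: "dW True p = p'" unfolding p'_def ..
  have S1: "dW False (\<lambda>w. \<Phi> w (L f w)) = (\<lambda>w. ec (fm w) + ec (wirt_m fp w) * p w
      + (ec (wirt_m fm w) + ec (wirt_m fpm w) * p w) * q w + (ec (fm w) + ec (fpm w) * p w) * q' w)"
  proof
    fix w
    show "dW False (\<lambda>w. \<Phi> w (L f w)) w = ec (fm w) + ec (wirt_m fp w) * p w
      + (ec (wirt_m fm w) + ec (wirt_m fpm w) * p w) * q w + (ec (fm w) + ec (fpm w) * p w) * q' w"
      unfolding e0
      by (simp add: dW_add dW_mult dW_ec esm_add esm_mult esm_ec esm_p esm_q f sm dMp dMq
          wop_def fm_def[symmetric] algebra_simps)
  qed
  have comm1: "wirt_m (wirt_p f) = wirt_p (wirt_m f)" using smooth_comm[OF f] by simp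
  have comm2: "wirt_p (wirt_m (wirt_m f)) = wirt_m (wirt_p (wirt_m f))"
    using smooth_comm[OF smooth_m[OF f]] .
  have sm2: "smooth (wirt_m f)" "smooth (wirt_p (wirt_m f))" "smooth (wirt_m (wirt_m f))"
    "smooth (wirt_m (wirt_p (wirt_m f)))" "smooth (wirt_m (wirt_p f))"
    using f by (auto intro!: smooth_p smooth_m)
  show ?thesis
    unfolding S1 unfolding fp_def fm_def fpm_def L_def \<Phi>_LJ
    by (simp add: dW_add dW_mult dW_ec esm_add esm_mult esm_ec esm_p esm_q esm_q' f sm2 dPq dPq' dPp
          wop_def comm1 comm2 algebra_simps)
qed

end


lemma prod_list_upt: "prod_list (map f [0..<n]) = (\<Prod>i<n. f i :: 'a::comm_monoid_mult)"
  by (induction n) (auto simp: mult.commute)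

lemma card_ge2: "(a :: 'g::finite) \<noteq> b \<Longrightarrow> CARD('g) \<ge> 2"
proof -
  assume "a \<noteq> b"
  then have "card {a, b} = 2" by simp
  moreover have "card {a, b} \<le> CARD('g)" by (rule card_mono) auto
  ultimately show ?thesis by simp
qed

lemma bodyT_minus_cT: "bodyT (X - cT (bodyT X)) = 0"
  by (cases X rule: dn.exhaust, rename_tac A B C, case_tac A) (simp add: cT_def)

lemma LiftT_JT0: "LiftT a b c d * JT 0 = LiftT a b c d"
  unfolding LiftT_def JT_def by (simp add: dn_zero)

lemma ev_inv_identity:
  fixes s :: "'a::comm_ring_1"
  assumes "A * B = 1" "A2 * B = A" "A3 * B = A2" "s ^ 3 = 0"
  shows "(A - A2 * s + A3 * s^2) * (B + s) = 1"
proof -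
  have "(A - A2 * s + A3 * s^2) * (B + s) = A * B + (A - A2 * B) * s + (A3 * B - A2) * s^2 + A3 * s^3"
    by (simp add: algebra_simps power2_eq_square power3_eq_cube)
  then show ?thesis using assms by simp
qed

context susy
begin

lemma CARD_ge2: "CARD('g) \<ge> 2" using card_ge2[OF theta_distinct] .

lemma \<Phi>_split: "\<Phi> z X = ec (bodyT X) + \<Phi> z (X - cT (bodyT X))"
  using rh_add[OF rh_\<Phi>, of z "cT (bodyT X)" "X - cT (bodyT X)"] \<Phi>_cT by simp

lemma \<Phi>_soul:
  shows "gbody (R (\<Phi> z (X - cT (bodyT X)))) = 0" "(\<Phi> z (X - cT (bodyT X)))^3 = 0"
  using gbody_\<Phi> bodyT_minus_cT cube_zero rh_power[OF rh_\<Phi>] rh_0[OF rh_\<Phi>] by metis+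

lemma gln_\<Phi>:
  "gln (R (\<Phi> z X)) = R (\<Phi> z (cT (Ln (bodyT X)) + cT (1 / bodyT X) * (X - cT (bodyT X))
      - cT (1 / (2 * (bodyT X)^2)) * (X - cT (bodyT X))^2))"
  apply (subst \<Phi>_split)
  apply (subst gln_ev[OF \<Phi>_soul CARD_ge2])
  apply (simp add: rh_add[OF rh_\<Phi>] rh_diff[OF rh_\<Phi>] rh_mult[OF rh_\<Phi>] rh_power[OF rh_\<Phi>] \<Phi>_cT)
  done

lemma K2:
  assumes "g \<noteq> 0"
  shows "gln (R (\<Phi> z (LiftT g a b d * JT t))) =
     R (\<Phi> z (LiftT (Ln g) (a / g) (b / g) (d / g - a * b / g^2) + DN (DN 0 0 t) (DN 0 0 0) (DN t 0 0)))"
proof -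
  have bd: "bodyT (LiftT g a b d * JT t) = g" unfolding LiftT_def JT_def by simp
  show ?thesis unfolding gln_\<Phi> bd T_ln_identity[OF assms] ..
qed

lemma K4:
  assumes "bodyT X \<noteq> 0"
  shows "gmul (ginv (R (\<Phi> z X))) (R (\<Phi> z X)) = gconst 1"
proof -
  let ?b = "bodyT X" and ?s = "\<Phi> z (X - cT (bodyT X))"
  have e: "\<Phi> z X = ec ?b + ?s" by (rule \<Phi>_split)
  have "ginv (R (\<Phi> z X)) = R (ec (1 / ?b) - ec (1 / ?b^2) * ?s + ec (1 / ?b^3) * ?s^2)"
    unfolding e by (rule ginv_ev[OF \<Phi>_soul CARD_ge2])
  moreover have "(ec (1 / ?b) - ec (1 / ?b^2) * ?s + ec (1 / ?b^3) * ?s^2) * (ec ?b + ?s) = 1"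
  proof (rule ev_inv_identity)
    show "ec (1 / ?b) * ec ?b = 1" "ec (1 / ?b^2) * ec ?b = ec (1 / ?b)" "ec (1 / ?b^3) * ec ?b = ec (1 / ?b^2)"
      using assms by (simp_all add: ec_mult[symmetric] ec_1 power2_eq_square power3_eq_cube)
    show "?s ^ 3 = 0" by (rule \<Phi>_soul)
  qed
  ultimately show ?thesis by (simp add: e[symmetric] R_times[symmetric] R_one[symmetric])
qed

lemma \<Phi>_DNt: "\<Phi> z (DN (DN 0 0 1) (DN 0 0 0) (DN 1 0 0)) = p' z + q' z"
  unfolding \<Phi>_def by (simp add: ec_0 ec_1)

lemma esm_\<Phi>L: "smooth f \<Longrightarrow> esm (\<lambda>w. \<Phi> w (L f w))"
  unfolding L_def \<Phi>_LiftT
  by (intro esm_add esm_mult esm_ec esm_p esm_q smooth_p smooth_m; assumption?)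

end


section \<open>L is a homomorphism on smooth functions\<close>

lemma wirt_add_fun:
  assumes "smooth f" "smooth g"
  shows "wirt_p (\<lambda>z. f z + g z) = (\<lambda>z. wirt_p f z + wirt_p g z)"
    "wirt_m (\<lambda>z. f z + g z) = (\<lambda>z. wirt_m f z + wirt_m g z)"
  using hw_wirt[OF hw_add[OF smooth_hw[OF assms(1)] smooth_hw[OF assms(2)]]] by auto

lemma wirt_mult_fun:
  assumes "smooth f" "smooth g"
  shows "wirt_p (\<lambda>z. f z * g z) = (\<lambda>z. wirt_p f z * g z + f z * wirt_p g z)"
    "wirt_m (\<lambda>z. f z * g z) = (\<lambda>z. wirt_m f z * g z + f z * wirt_m g z)"
  using hw_wirt[OF hw_mult[OF smooth_hw[OF assms(1)] smooth_hw[OF assms(2)]]] by auto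

lemma L_add: "smooth f \<Longrightarrow> smooth g \<Longrightarrow> L (\<lambda>z. f z + g z) z = L f z + L g z"
  unfolding L_def LiftT_def
  by (simp add: wirt_add_fun smooth_m)

lemma L_mult: "smooth f \<Longrightarrow> smooth g \<Longrightarrow> L (\<lambda>z. f z * g z) z = L f z * L g z"
proof -
  assume f: "smooth f" and g: "smooth g"
  have e: "wirt_p (wirt_m (\<lambda>z. f z * g z)) z = wirt_p (wirt_m f) z * g z + wirt_m f z * wirt_p g z
     + (wirt_p f z * wirt_m g z + f z * wirt_p (wirt_m g) z)"
  proof -
    have "hw (\<lambda>z. wirt_m f z * g z + f z * wirt_m g z)
      (wirt_p (wirt_m f) z * g z + wirt_m f z * wirt_p g z + (wirt_p f z * wirt_m g z + f z * wirt_p (wirt_m g) z))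
      (wirt_m (wirt_m f) z * g z + wirt_m f z * wirt_m g z + (wirt_m f z * wirt_m g z + f z * wirt_m (wirt_m g) z)) z"
      by (intro hw_add hw_mult smooth_hw smooth_m f g)
    then show ?thesis unfolding wirt_mult_fun(2)[OF f g] by (rule hw_wirt(1))
  qed
  show ?thesis unfolding L_def LiftT_def unfolding e unfolding wirt_mult_fun[OF f g]
    by (simp add: dn_zero algebra_simps)
qed

lemma L_const: "L (\<lambda>z. c) z = cT c"
  unfolding L_def LiftT_def cT_def by (simp add: dn_zero)

lemma L_sum: "finite A \<Longrightarrow> (\<And>i. i \<in> A \<Longrightarrow> smooth (f i)) \<Longrightarrow> L (\<lambda>z. \<Sum>i\<in>A. f i z) z = (\<Sum>i\<in>A. L (f i) z)"
proof (induction A rule: finite_induct)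
  case empty then show ?case by (simp add: L_const cT_def dn_zero)
next
  case (insert a A)
  have "L (\<lambda>z. \<Sum>i\<in>insert a A. f i z) z = L (\<lambda>z. f a z + (\<Sum>i\<in>A. f i z)) z"
    using insert by simp
  also have "\<dots> = L (f a) z + L (\<lambda>z. \<Sum>i\<in>A. f i z) z"
    using insert by (intro L_add smooth_sum) auto
  finally show ?case using insert by simp
qed

lemma L_prod: "finite A \<Longrightarrow> (\<And>i. i \<in> A \<Longrightarrow> smooth (f i)) \<Longrightarrow> L (\<lambda>z. \<Prod>i\<in>A. f i z) z = (\<Prod>i\<in>A. L (f i) z)"
proof (induction A rule: finite_induct)
  case empty then show ?case by (simp add: L_const cT_def dn_one)
next
  case (insert a A)
  have "L (\<lambda>z. \<Prod>i\<in>insert a A. f i z) z = L (\<lambda>z. f a z * (\<Prod>i\<in>A. f i z)) z"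
    using insert by simp
  also have "\<dots> = L (f a) z * L (\<lambda>z. \<Prod>i\<in>A. f i z) z"
    using insert by (intro L_mult smooth_prod) auto
  finally show ?case using insert by simp
qed

lemma L_cmult: "smooth f \<Longrightarrow> L (\<lambda>z. c * f z) z = cT c * L f z"
proof -
  assume f: "smooth f"
  have "L (\<lambda>z. c * f z) z = L (\<lambda>z. c) z * L f z" by (rule L_mult[OF smooth_const f])
  then show ?thesis by (simp add: L_const)
qed

section \<open>Logarithms of real nonzero smooth functions\<close>

definition lnok :: "(complex \<Rightarrow> complex) \<Rightarrow> bool" where
  "lnok f \<longleftrightarrow> smooth (\<lambda>z. Ln (f z)) \<and> (\<forall>z. hw (\<lambda>z. Ln (f z)) (wirt_p f z / f z) (wirt_m f z / f z) z)"

lemma sign_const: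
  fixes f :: "complex \<Rightarrow> complex"
  assumes c: "continuous_on UNIV f" and r: "\<And>z. Im (f z) = 0" and nz: "\<And>z. f z \<noteq> 0"
  shows "(\<forall>z. Re (f z) > 0) \<or> (\<forall>z. Re (f z) < 0)"
proof (rule ccontr)
  assume "\<not> ?thesis"
  then have "\<exists>z1. Re (f z1) \<le> 0" "\<exists>z2. Re (f z2) \<ge> 0" by (auto simp: not_less)
  then obtain z1 z2 where z1: "Re (f z1) \<le> 0" and z2: "Re (f z2) \<ge> 0" by blast
  have z1': "Re (f z1) < 0" using z1 nz[of z1] r[of z1] by (metis complex_eq_iff order_less_le zero_complex.simps)
  have z2': "Re (f z2) > 0" using z2 nz[of z2] r[of z2] by (metis complex_eq_iff order_less_le zero_complex.simps)
  define h where "h t = Re (f (z1 + of_real t * (z2 - z1)))" for t :: real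
  have hc: "continuous_on {0..1} h" unfolding h_def
    by (intro continuous_intros continuous_on_compose2[OF c]) auto
  have "\<exists>t. 0 \<le> t \<and> t \<le> 1 \<and> h t = 0"
    by (rule IVT') (use z1' z2' hc in \<open>auto simp: h_def\<close>)
  then obtain t where "h t = 0" by blast
  then have "f (z1 + of_real t * (z2 - z1)) = 0" unfolding h_def using r by (simp add: complex_eq_iff)
  then show False using nz by blast
qed


lemma lnok_real:
  assumes f: "smooth f" and r: "\<And>z. Im (f z) = 0" and nz: "\<And>z. f z \<noteq> 0"
  shows "lnok f"
proof -
  have c: "continuous_on UNIV f"
    using smooth_diffble[OF f] by (simp add: continuous_at_imp_continuous_on differentiable_imp_continuous_within)
  show ?thesis
  proof (cases "\<forall>z. Re (f z) > 0")
    case True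
    have nr: "f z \<notin> \<real>\<^sub>\<le>\<^sub>0" for z
    proof
      assume "f z \<in> \<real>\<^sub>\<le>\<^sub>0"
      then obtain r where "f z = of_real r" "r \<le> 0" by (auto simp: nonpos_Reals_def)
      then show False using True[rule_format, of z] by simp
    qed
    show ?thesis unfolding lnok_def
      using smooth_Ln[OF f nr] hw_Ln[OF smooth_hw[OF f] nr] by blast
  next
    case False
    then have neg: "Re (f z) < 0" for z using sign_const[OF c r nz] by auto
    have nr: "- f z \<notin> \<real>\<^sub>\<le>\<^sub>0" for z
    proof
      assume "- f z \<in> \<real>\<^sub>\<le>\<^sub>0"
      then obtain r where r: "- f z = of_real r" "r \<le> 0" by (auto simp: nonpos_Reals_def)
      then have "f z = of_real (- r)" by (metis minus_minus of_real_minus)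
      then show False using neg[of z] r(2) by simp
    qed
    have e: "Ln (f z) = Ln (- f z) + \<i> * pi" for z
    proof -
      have "Ln (- (- f z)) = Ln (- f z) + \<i> * pi"
        using Ln_minus[of "- f z"] nz[of z] neg[of z] r[of z] by auto
      then show ?thesis by simp
    qed
    have sm: "smooth (\<lambda>z. Ln (- f z) + \<i> * pi)"
      by (intro smooth_add smooth_Ln smooth_uminus f smooth_const nr)
    have "hw (\<lambda>z. Ln (- f z) + \<i> * pi) (- wirt_p f z / - f z + 0) (- wirt_m f z / - f z + 0) z" for z
      by (intro hw_add hw_Ln hw_uminus smooth_hw f nr hw_const)
    then show ?thesis unfolding lnok_def e using sm by simp
  qed
qed

lemma L_Ln:
  assumes f: "smooth f" and l: "lnok f" and nz: "\<And>z. f z \<noteq> 0"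
  shows "L (\<lambda>z. Ln (f z)) z = LiftT (Ln (f z)) (wirt_p f z / f z) (wirt_m f z / f z)
      (wirt_p (wirt_m f) z / f z - wirt_p f z * wirt_m f z / (f z)^2)"
proof -
  have w: "wirt_p (\<lambda>z. Ln (f z)) = (\<lambda>z. wirt_p f z / f z)" "wirt_m (\<lambda>z. Ln (f z)) = (\<lambda>z. wirt_m f z * inverse (f z))"
  proof -
    have h: "hw (\<lambda>z. Ln (f z)) (wirt_p f z / f z) (wirt_m f z / f z) z" for z
      using l unfolding lnok_def by blast
    show "wirt_p (\<lambda>z. Ln (f z)) = (\<lambda>z. wirt_p f z / f z)" using hw_wirt(1)[OF h] by blast
    show "wirt_m (\<lambda>z. Ln (f z)) = (\<lambda>z. wirt_m f z * inverse (f z))"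
      using hw_wirt(2)[OF h] by (auto simp: divide_inverse)
  qed
  have "hw (\<lambda>z. wirt_m f z * inverse (f z)) (wirt_p (wirt_m f) z * inverse (f z) + wirt_m f z * (- wirt_p f z / (f z)^2))
      (wirt_m (wirt_m f) z * inverse (f z) + wirt_m f z * (- wirt_m f z / (f z)^2)) z"
    by (intro hw_mult hw_inverse smooth_hw smooth_m f nz)
  note h = hw_wirt(1)[OF this]
  show ?thesis unfolding L_def w h by (simp add: field_simps)
qed

lemma wirt_pm_Ln:
  assumes f: "smooth f" and l: "lnok f" and nz: "\<And>z. f z \<noteq> 0"
  shows "wirt_p (wirt_m (\<lambda>z. Ln (f z))) z = wirt_p (wirt_m f) z / f z - wirt_p f z * wirt_m f z / (f z)^2"
proof -
  have "LiftT (Ln (f z)) (wirt_p (\<lambda>z. Ln (f z)) z) (wirt_m (\<lambda>z. Ln (f z)) z) (wirt_p (wirt_m (\<lambda>z. Ln (f z))) z)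
     = LiftT (Ln (f z)) (wirt_p f z / f z) (wirt_m f z / f z)
      (wirt_p (wirt_m f) z / f z - wirt_p f z * wirt_m f z / (f z)^2)"
    using L_Ln[OF assms, of z] unfolding L_def .
  then show ?thesis unfolding LiftT_def by (simp only: dn.inject)
qed

lemma real_wirt:
  assumes f: "smooth f" and r: "\<And>z. cnj (f z) = f z"
  shows "cnj (wirt_m f z) = wirt_p f z" "cnj (wirt_p (wirt_m f) z) = wirt_p (wirt_m f) z"
proof -
  have ff: "(\<lambda>z. cnj (f z)) = f" using r by auto
  have a: "cnj (wirt_m f w) = wirt_p f w" for w
  proof -
    have "wirt_p (\<lambda>z. cnj (f z)) w = cnj (wirt_m f w)"
      using wirt_cnj[OF smooth_diffble[OF f], of w] by blast
    then show ?thesis unfolding ff by (rule sym)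
  qed
  then show "cnj (wirt_m f z) = wirt_p f z" .
  have "cnj (wirt_p (wirt_m f) z) = wirt_m (\<lambda>w. cnj (wirt_m f w)) z"
    using wirt_cnj[OF smooth_diffble[OF smooth_m[OF f]], of z] by (metis complex_cnj_cnj)
  also have "(\<lambda>w. cnj (wirt_m f w)) = wirt_p f" using a by auto
  also have "wirt_m (wirt_p f) z = wirt_p (wirt_m f) z" using smooth_comm[OF f] by simp
  finally show "cnj (wirt_p (wirt_m f) z) = wirt_p (wirt_m f) z" .
qed


lemma cdet_transpose: "cdet m (\<lambda>i j. A j i) = cdet m A"
proof -
  let ?S = "{p. p permutes {0..<m}}"
  have "cdet m (\<lambda>i j. A j i) = (\<Sum>p\<in>?S. of_int (sign p) * (\<Prod>i<m. A (p i) i))"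
    unfolding cdet_def ..
  also have "\<dots> = (\<Sum>p\<in>?S. of_int (sign (inv p)) * (\<Prod>i<m. A i (inv p i)))"
  proof (rule sum.cong[OF refl])
    fix p assume "p \<in> ?S"
    then have p: "p permutes {..<m}" by (simp add: atLeast0LessThan)
    have "permutation p" using p permutation_permutes by blast
    then have s: "sign (inv p) = sign p" by (rule sign_inverse)
    have "(\<Prod>i<m. A i (inv p i)) = (\<Prod>i<m. (\<lambda>i. A i (inv p i)) (p i))"
      by (rule prod.permute[OF p, unfolded comp_def])
    also have "\<dots> = (\<Prod>i<m. A (p i) i)" using permutes_inverses(2)[OF p] by simp
    finally show "of_int (sign p) * (\<Prod>i<m. A (p i) i) = of_int (sign (inv p)) * (\<Prod>i<m. A i (inv p i))"
      by (simp add: s)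
  qed
  also have "\<dots> = (\<Sum>p\<in>?S. of_int (sign p) * (\<Prod>i<m. A i (p i)))"
    by (rule sum.reindex_bij_witness[where i = inv and j = inv])
       (auto simp: permutes_inv permutes_inv_inv)
  also have "\<dots> = cdet m A" unfolding cdet_def ..
  finally show ?thesis .
qed

lemma cnj_cdet: "cnj (cdet m A) = cdet m (\<lambda>i j. cnj (A i j))"
  unfolding cdet_def by (simp add: cnj_sum cnj_prod)

lemma ZdZ_real: "cnj (cdet M (ZdZ N Z z)) = cdet M (ZdZ N Z z)"
proof -
  have "(\<lambda>i j. cnj (ZdZ N Z z i j)) = (\<lambda>i j. ZdZ N Z z j i)"
    unfolding ZdZ_def by (auto simp: cnj_sum mult.commute)
  then show ?thesis unfolding cnj_cdet using cdet_transpose[of M "ZdZ N Z z"] by simp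
qed

lemma gconj_gadd: "gconj \<sigma> (gadd x y) = gadd (gconj \<sigma> x) (gconj \<sigma> y)"
  unfolding gconj_def gadd_def by (simp add: Let_def algebra_simps)
lemma gconj_gscale: "gconj \<sigma> (gscale c x) = gscale (cnj c) (gconj \<sigma> x)"
  unfolding gconj_def gscale_def by (simp add: Let_def algebra_simps)
lemma gconj_gconst: "gconj \<sigma> (gconst c) = gconst (cnj c)"
  unfolding gconj_def gconst_def by (auto simp: Let_def fun_eq_iff)

lemma rh_sum: "rh \<phi> \<Longrightarrow> \<phi> (\<Sum>i\<in>A. f i) = (\<Sum>i\<in>A. \<phi> (f i))"
  by (induction A rule: infinite_finite_induct) (auto simp: rh_0 rh_add)
lemma rh_prod: "rh \<phi> \<Longrightarrow> \<phi> (\<Prod>i\<in>A. f i) = (\<Prod>i\<in>A. \<phi> (f i))"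
  by (induction A rule: infinite_finite_induct) (auto simp: rh_1 rh_mult)


context susy
begin

lemma superW_R: "superW \<theta>p \<eta> Z z i j = R (ec (Z z i j) + ec (wirt_p (\<lambda>w. Z w i j) z) * p z)"
  unfolding superW_def P_def[symmetric]
  by (simp add: R_plus R_times R_ec R_p gmul_gconst_right gmul_gconst_left)

lemma superW_conj: "gconj \<sigma> (superW \<theta>p \<eta> Z z i j) = R (ec (cnj (Z z i j)) + ec (cnj (wirt_p (\<lambda>w. Z w i j) z)) * q z)"
  unfolding superW_def P_def[symmetric]
  by (simp add: R_plus R_times R_ec R_q Q_def gmul_gconst_right gmul_gconst_left gconj_gadd gconj_gscale gconj_gconst)

lemma WdW_R: "WdW N \<sigma> (superW \<theta>p \<eta> Z) z i k = R (\<Sum>j<N.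
   (ec (cnj (Z z j i)) + ec (cnj (wirt_p (\<lambda>w. Z w j i) z)) * q z) * (ec (Z z j k) + ec (wirt_p (\<lambda>w. Z w j k) z) * p z))"
  unfolding WdW_def superW_conj unfolding superW_R by (simp add: R_sum R_times)

lemma ec_sum: "ec (\<Sum>i\<in>A. f i) = (\<Sum>i\<in>A. ec (f i))"
  using rh_sum[OF rh_ec] .

lemma ZdZ_L:
  assumes hi: "\<And>j. j < N \<Longrightarrow> (\<lambda>z. Z z j i) holomorphic_on UNIV"
      and hk: "\<And>j. j < N \<Longrightarrow> (\<lambda>z. Z z j k) holomorphic_on UNIV"
  shows "WdW N \<sigma> (superW \<theta>p \<eta> Z) z i k = R (\<Phi> z (L (\<lambda>z. ZdZ N Z z i k) z))"
    and "smooth (\<lambda>z. ZdZ N Z z i k)"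
proof -
  define a where "a j = (\<lambda>z. cnj (Z z j i))" for j
  define b where "b j = (\<lambda>z. Z z j k)" for j
  define a' where "a' j = (\<lambda>z. cnj (deriv (\<lambda>w. Z w j i) z))" for j
  define b' where "b' j = deriv (\<lambda>w. Z w j k)" for j
  have hwa: "hw (a j) 0 (a' j z) z" if "j < N" for j z
    using hw_cnj[OF hw_entire[OF hi[OF that]]] unfolding a_def a'_def by simp
  have hwb: "hw (b j) (b' j z) 0 z" if "j < N" for j z
    using hw_entire[OF hk[OF that]] unfolding b_def b'_def by simp
  have hwa': "hw (a' j) 0 (cnj (deriv (deriv (\<lambda>w. Z w j i)) z)) z" if "j < N" for j z
    using hw_cnj[OF hw_entire[OF holomorphic_deriv[OF hi[OF that]]]] unfolding a'_def by simp
  have D: "(\<lambda>z. ZdZ N Z z i k) = (\<lambda>z. \<Sum>j<N. a j z * b j z)" unfolding ZdZ_def a_def b_def ..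
  have hD: "hw (\<lambda>z. \<Sum>j<N. a j z * b j z) (\<Sum>j<N. a j z * b' j z) (\<Sum>j<N. a' j z * b j z) z" for z
  proof -
    have "hw (\<lambda>z. \<Sum>j<N. a j z * b j z) (\<Sum>j<N. 0 * b j z + a j z * b' j z) (\<Sum>j<N. a' j z * b j z + a j z * 0) z"
      by (intro hw_sum hw_mult hwa hwb) auto
    then show ?thesis by simp
  qed
  have wm: "wirt_m (\<lambda>z. \<Sum>j<N. a j z * b j z) = (\<lambda>z. \<Sum>j<N. a' j z * b j z)"
    using hw_wirt(2)[OF hD] by blast
  have hD2: "hw (\<lambda>z. \<Sum>j<N. a' j z * b j z) (\<Sum>j<N. a' j z * b' j z) (\<Sum>j<N. cnj (deriv (deriv (\<lambda>w. Z w j i)) z) * b j z) z" for z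
  proof -
    have "hw (\<lambda>z. \<Sum>j<N. a' j z * b j z) (\<Sum>j<N. 0 * b j z + a' j z * b' j z)
       (\<Sum>j<N. cnj (deriv (deriv (\<lambda>w. Z w j i)) z) * b j z + a' j z * 0) z"
      by (intro hw_sum hw_mult hwa' hwb) auto
    then show ?thesis by simp
  qed
  have LD: "L (\<lambda>z. ZdZ N Z z i k) z = LiftT (\<Sum>j<N. a j z * b j z) (\<Sum>j<N. a j z * b' j z)
      (\<Sum>j<N. a' j z * b j z) (\<Sum>j<N. a' j z * b' j z)"
    unfolding L_def D wm hw_wirt[OF hD] hw_wirt(1)[OF hD2] ..
  have wpZ: "wirt_p (\<lambda>w. Z w j k) z = b' j z" "cnj (wirt_p (\<lambda>w. Z w j i) z) = a' j z" if "j < N" for j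
    using wirt_entire[OF hk[OF that]] wirt_entire[OF hi[OF that]] unfolding a'_def b'_def by auto
  have "(\<Sum>j<N. (ec (cnj (Z z j i)) + ec (cnj (wirt_p (\<lambda>w. Z w j i) z)) * q z) *
        (ec (Z z j k) + ec (wirt_p (\<lambda>w. Z w j k) z) * p z))
     = (\<Sum>j<N. ec (a j z * b j z) + ec (a j z * b' j z) * p z + (ec (a' j z * b j z) + ec (a' j z * b' j z) * p z) * q z)"
  proof (rule sum.cong[OF refl])
    fix j assume "j \<in> {..<N}"
    then have j: "j < N" by simp
    show "(ec (cnj (Z z j i)) + ec (cnj (wirt_p (\<lambda>w. Z w j i) z)) * q z) *
        (ec (Z z j k) + ec (wirt_p (\<lambda>w. Z w j k) z) * p z) =
        ec (a j z * b j z) + ec (a j z * b' j z) * p z + (ec (a' j z * b j z) + ec (a' j z * b' j z) * p z) * q z"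
      unfolding wpZ[OF j] by (simp add: ec_mult a_def b_def algebra_simps)
  qed
  also have "\<dots> = \<Phi> z (L (\<lambda>z. ZdZ N Z z i k) z)"
    unfolding LD \<Phi>_LiftT by (simp add: ec_sum sum.distrib sum_distrib_right sum_distrib_left algebra_simps)
  finally show "WdW N \<sigma> (superW \<theta>p \<eta> Z) z i k = R (\<Phi> z (L (\<lambda>z. ZdZ N Z z i k) z))"
    unfolding WdW_R by simp
  show "smooth (\<lambda>z. ZdZ N Z z i k)"
    unfolding ZdZ_def by (intro smooth_sum smooth_mult smooth_cnj smooth_holo hi hk) auto
qed

end


context susy
begin

lemma gdet_L:
  assumes Zh: "\<And>i j. i < N \<Longrightarrow> j < M \<Longrightarrow> (\<lambda>z. Z z i j) holomorphic_on UNIV"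
  shows "gdet M (WdW N \<sigma> (superW \<theta>p \<eta> Z) z) = R (\<Phi> z (L (\<lambda>z. cdet M (ZdZ N Z z)) z))"
    and "smooth (\<lambda>z. cdet M (ZdZ N Z z))"
proof -
  let ?Perms = "{p. p permutes {0..<M}}"
  let ?W = "WdW N \<sigma> (superW \<theta>p \<eta> Z) z"
  define F where "F p = (\<lambda>z. of_int (sign p) * (\<Prod>i<M. ZdZ N Z z i (p i)))" for p :: "nat \<Rightarrow> nat"
  have Dik: "?W i k = R (\<Phi> z (L (\<lambda>z. ZdZ N Z z i k) z))" "smooth (\<lambda>z. ZdZ N Z z i k)"
    if "i < M" "k < M" for i k
    using ZdZ_L[where i=i and k=k and Z=Z and N=N] Zh that by auto
  have pim: "p i < M" if "p \<in> ?Perms" "i < M" for p i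
    using that permutes_in_image[of p "{0..<M}" i] by auto
  have smF: "smooth (F p)" if "p \<in> ?Perms" for p
    unfolding F_def using Dik(2) pim that by (intro smooth_cmult smooth_prod) auto
  have step: "gscale (of_int (sign p)) (gprod_list (map (\<lambda>i. ?W i (p i)) [0..<M])) = R (\<Phi> z (L (F p) z))"
    if p: "p \<in> ?Perms" for p
  proof -
    have "map (\<lambda>i. ?W i (p i)) [0..<M] = map (\<lambda>i. R (\<Phi> z (L (\<lambda>z. ZdZ N Z z i (p i)) z))) [0..<M]"
      using Dik(1) pim[OF p] by (intro map_cong) auto
    then have "gprod_list (map (\<lambda>i. ?W i (p i)) [0..<M])
        = R (prod_list (map (\<lambda>i. \<Phi> z (L (\<lambda>z. ZdZ N Z z i (p i)) z)) [0..<M]))"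
      by (simp only: R_prod_list)
    also have "prod_list (map (\<lambda>i. \<Phi> z (L (\<lambda>z. ZdZ N Z z i (p i)) z)) [0..<M])
        = \<Phi> z (\<Prod>i<M. L (\<lambda>z. ZdZ N Z z i (p i)) z)"
      by (simp add: prod_list_upt rh_prod[OF rh_\<Phi>])
    also have "(\<Prod>i<M. L (\<lambda>z. ZdZ N Z z i (p i)) z) = L (\<lambda>z. \<Prod>i<M. ZdZ N Z z i (p i)) z"
      using Dik(2) pim[OF p] by (intro L_prod[symmetric]) auto
    finally have "gscale (of_int (sign p)) (gprod_list (map (\<lambda>i. ?W i (p i)) [0..<M]))
       = R (\<Phi> z (cT (of_int (sign p))) * \<Phi> z (L (\<lambda>z. \<Prod>i<M. ZdZ N Z z i (p i)) z))"
      by (simp add: gscale_R \<Phi>_cT)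
    also have "\<dots> = R (\<Phi> z (L (F p) z))"
      unfolding F_def rh_mult[OF rh_\<Phi>, symmetric]
      using Dik(2) pim[OF p] by (subst L_cmult) (auto intro!: smooth_prod)
    finally show ?thesis .
  qed
  have "gdet M ?W = gsum (\<lambda>p. R (\<Phi> z (L (F p) z))) ?Perms"
    unfolding gdet_def gsum_def using step by (intro ext sum.cong) auto
  also have "\<dots> = R (\<Phi> z (\<Sum>p\<in>?Perms. L (F p) z))"
    by (simp add: R_sum[symmetric] rh_sum[OF rh_\<Phi>] finite_permutations)
  also have "(\<Sum>p\<in>?Perms. L (F p) z) = L (\<lambda>z. \<Sum>p\<in>?Perms. F p z) z"
    using smF by (intro L_sum[symmetric]) (auto simp: finite_permutations)
  also have "(\<lambda>z. \<Sum>p\<in>?Perms. F p z) = (\<lambda>z. cdet M (ZdZ N Z z))"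
    unfolding F_def cdet_def ..
  finally show "gdet M ?W = R (\<Phi> z (L (\<lambda>z. cdet M (ZdZ N Z z)) z))" .
  show "smooth (\<lambda>z. cdet M (ZdZ N Z z))"
    using smF unfolding F_def[abs_def] cdet_def by (intro smooth_sum) (auto simp: finite_permutations)
qed

end


context susy
begin

lemma core:
  assumes Z_holo: "\<And>i j. i < N \<Longrightarrow> j < M \<Longrightarrow> (\<lambda>z. Z z i j) holomorphic_on UNIV"
    and Z_rank: "\<And>z. cdet M (ZdZ N Z z) \<noteq> 0"
    and g_nonzero: "\<And>z. bos_metric N M Z z \<noteq> 0"
    and kappa_const: "\<And>z. bos_curv N M Z z = c"
  shows "susy_curv N M \<sigma> (superW \<theta>p \<eta> Z) z = gconst c"
proof -
  define D where "D = (\<lambda>z. cdet M (ZdZ N Z z))"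
  have gd: "gdet M (WdW N \<sigma> (superW \<theta>p \<eta> Z) w) = R (\<Phi> w (L D w))" for w
    unfolding D_def using gdet_L(1)[where Z=Z and N=N and M=M, OF Z_holo] by blast
  have smD: "smooth D" unfolding D_def using gdet_L(2)[where Z=Z and N=N and M=M, OF Z_holo] by blast
  have Dnz: "D w \<noteq> 0" for w unfolding D_def by (rule Z_rank)
  have Dr: "cnj (D w) = D w" for w unfolding D_def by (rule ZdZ_real)
  have DIm: "Im (D w) = 0" for w using Dr[of w] by (metis complex_cnj_cancel_iff complex_eq_iff cnj.simps(2) neg_equal_zero)
  have lnD: "lnok D" by (rule lnok_real[OF smD DIm Dnz])
  define lD where "lD = (\<lambda>z. Ln (D z))"
  have smlD: "smooth lD" using lnD unfolding lnok_def lD_def by blast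
  define g where "g = wirt_p (wirt_m lD)"
  have gb: "g = bos_metric N M Z" unfolding g_def lD_def D_def bos_metric_def wirt_pm_def ..
  have smg: "smooth g" unfolding g_def by (intro smooth_p smooth_m smlD)
  have gnz: "g w \<noteq> 0" for w unfolding gb by (rule g_nonzero)
  have gf: "g w = wirt_p (wirt_m D) w / D w - wirt_p D w * wirt_m D w / (D w)^2" for w
    unfolding g_def lD_def by (rule wirt_pm_Ln[OF smD lnD Dnz])
  have gr: "cnj (g w) = g w" for w
  proof -
    have a: "cnj (wirt_m D w) = wirt_p D w" and b: "cnj (wirt_p (wirt_m D) w) = wirt_p (wirt_m D) w"
      using real_wirt[OF smD Dr] by auto
    have a': "cnj (wirt_p D w) = wirt_m D w" using a by (metis complex_cnj_cnj)
    show ?thesis unfolding gf by (simp add: a a' b Dr mult.commute)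
  qed
  have gIm: "Im (g w) = 0" for w using gr[of w] by (metis complex_cnj_cancel_iff complex_eq_iff cnj.simps(2) neg_equal_zero)
  have lng: "lnok g" by (rule lnok_real[OF smg gIm gnz])
  define lg where "lg = (\<lambda>z. Ln (g z))"
  have smlg: "smooth lg" using lng unfolding lnok_def lg_def by blast
  have ln1: "gln (gdet M (WdW N \<sigma> (superW \<theta>p \<eta> Z) w)) = R (\<Phi> w (L lD w))" for w
  proof -
    have "gln (gdet M (WdW N \<sigma> (superW \<theta>p \<eta> Z) w)) =
       gln (R (\<Phi> w (LiftT (D w) (wirt_p D w) (wirt_m D w) (wirt_p (wirt_m D) w) * JT 0)))"
      unfolding gd L_def LiftT_JT0 ..
    also have "\<dots> = R (\<Phi> w (L lD w))"
      unfolding K2[OF Dnz] lD_def L_Ln[OF smD lnD Dnz] by (simp add: dn_zero[symmetric])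
    finally show ?thesis .
  qed
  have smet: "susy_metric N M \<sigma> (superW \<theta>p \<eta> Z) w = R (\<Phi> w (L g w * JT 1))" for w
  proof -
    have e1: "(\<lambda>z. gln (gdet M (WdW N \<sigma> (superW \<theta>p \<eta> Z) z))) = (\<lambda>z. R (\<Phi> z (L lD z)))"
      using ln1 by auto
    have e2: "sd_m (\<lambda>z. R (\<Phi> z (L lD z))) = (\<lambda>z. R (dW False (\<lambda>z. \<Phi> z (L lD z)) z))"
      by (rule ext, rule sd_m_R)
    show ?thesis
      unfolding susy_metric_def sd_pm_def e1 e2 sd_p_R K1[OF smlD] g_def ..
  qed
  have ln2: "gln (susy_metric N M \<sigma> (superW \<theta>p \<eta> Z) w) = R (\<Phi> w (L lg w) + p' w + q' w)" for w
  proof -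
    have "gln (susy_metric N M \<sigma> (superW \<theta>p \<eta> Z) w) =
       gln (R (\<Phi> w (LiftT (g w) (wirt_p g w) (wirt_m g w) (wirt_p (wirt_m g) w) * JT 1)))"
      unfolding smet L_def ..
    also have "\<dots> = R (\<Phi> w (L lg w) + \<Phi> w (DN (DN 0 0 1) (DN 0 0 0) (DN 1 0 0)))"
      unfolding K2[OF gnz] lg_def L_Ln[OF smg lng gnz] rh_add[OF rh_\<Phi>] ..
    finally show ?thesis unfolding \<Phi>_DNt by (simp add: add.assoc)
  qed
  have kap: "wirt_p (wirt_m lg) = (\<lambda>z. - c * g z)"
  proof
    fix w
    have "bos_curv N M Z w = c" by (rule kappa_const)
    then have "- wirt_p (wirt_m lg) w / g w = c"
      unfolding bos_curv_def gb[symmetric] lg_def wirt_pm_def .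
    then have "- wirt_p (wirt_m lg) w = c * g w" using gnz[of w] by (simp add: field_simps)
    then show "wirt_p (wirt_m lg) w = - c * g w" by (metis minus_minus mult_minus_left)
  qed
  let ?G = "\<lambda>w. \<Phi> w (L lg w)"
  have esG: "esm ?G" by (rule esm_\<Phi>L[OF smlg])
  have d1: "sd_m (\<lambda>w. gln (susy_metric N M \<sigma> (superW \<theta>p \<eta> Z) w))
      = (\<lambda>w. R (dW False ?G w + dW False q' w))"
  proof
    fix w
    have "sd_m (\<lambda>w. gln (susy_metric N M \<sigma> (superW \<theta>p \<eta> Z) w)) w
        = R (dW False (\<lambda>w. ?G w + p' w + q' w) w)"
      unfolding ln2 sd_m_R ..
    also have "dW False (\<lambda>w. ?G w + p' w + q' w) w = dW False ?G w + dW False p' w + dW False q' w"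
      by (simp add: dW_add esm_add esG esm_p' esm_q')
    also have "dW False p' w = 0" by (rule hol_dM[OF hol_p'])
    finally show "sd_m (\<lambda>w. gln (susy_metric N M \<sigma> (superW \<theta>p \<eta> Z) w)) w
        = R (dW False ?G w + dW False q' w)" by simp
  qed
  have d2: "sd_pm (\<lambda>w. gln (susy_metric N M \<sigma> (superW \<theta>p \<eta> Z) w)) z
      = R (\<Phi> z (L (\<lambda>w. - c * g w) z * JT 1))"
  proof -
    have "sd_pm (\<lambda>w. gln (susy_metric N M \<sigma> (superW \<theta>p \<eta> Z) w)) z
        = R (dW True (\<lambda>w. dW False ?G w + dW False q' w) z)"
      unfolding sd_pm_def d1 sd_p_R ..
    also have "dW True (\<lambda>w. dW False ?G w + dW False q' w) z = dW True (dW False ?G) z + dW True (dW False q') z"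
      by (rule dW_add[OF esm_dW[OF esG] esm_dW[OF esm_q']])
    also have "dW True (dW False q') z = 0" by (rule ahol_dP[OF ahol_dM[OF ahol_q']])
    also have "dW True (dW False ?G) z = \<Phi> z (L (wirt_p (wirt_m lg)) z * JT 1)" by (rule K1[OF smlg])
    finally show ?thesis unfolding kap by simp
  qed
  let ?X = "L g z * JT 1"
  have bX: "bodyT ?X \<noteq> 0" unfolding L_def LiftT_def JT_def using gnz[of z] by simp
  have d3: "sd_pm (\<lambda>w. gln (susy_metric N M \<sigma> (superW \<theta>p \<eta> Z) w)) z = gscale (- c) (R (\<Phi> z ?X))"
    unfolding d2 L_cmult[OF smg] gscale_R rh_mult[OF rh_\<Phi>] \<Phi>_cT by (simp add: mult.assoc)
  show ?thesis
    unfolding susy_curv_def d3 unfolding smet gmul_gscale_right K4[OF bX]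
    by (simp add: gscale_def gconst_def fun_eq_iff)
qed

end

theorem theorem1:
  fixes N M :: nat
    and Z :: "complex \<Rightarrow> nat \<Rightarrow> nat \<Rightarrow> complex"
    and \<theta>p \<theta>m :: "'g::{finite,linorder}"
    and \<sigma> :: "'g \<Rightarrow> 'g"
    and \<eta> :: "complex \<Rightarrow> 'g grass"
    and c :: complex
  assumes Z_holo: "\<And>i j. i < N \<Longrightarrow> j < M \<Longrightarrow> (\<lambda>z. Z z i j) holomorphic_on UNIV"
    and Z_rank: "\<And>z. cdet M (ZdZ N Z z) \<noteq> 0"
    and g_nonzero: "\<And>z. bos_metric N M Z z \<noteq> 0"
    and kappa_const: "\<And>z. bos_curv N M Z z = c"
    and theta_distinct: "\<theta>p \<noteq> \<theta>m"
    and sigma_inv: "\<And>a. \<sigma> (\<sigma> a) = a"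
    and sigma_theta: "\<sigma> \<theta>p = \<theta>m"
    and eta_holo: "\<And>S. (\<lambda>z. \<eta> z S) holomorphic_on UNIV"
    and eta_odd: "\<And>z S. \<eta> z S \<noteq> 0 \<Longrightarrow> odd (card S)"
    and eta_no_theta: "\<And>z S. \<eta> z S \<noteq> 0 \<Longrightarrow> \<theta>p \<notin> S \<and> \<theta>m \<notin> S"
  shows "\<forall>z. susy_curv N M \<sigma> (superW \<theta>p \<eta> Z) z = gconst c"
proof
  fix z
  interpret susy \<theta>p \<theta>m \<sigma> \<eta>
    by unfold_locales (fact theta_distinct sigma_inv sigma_theta eta_holo eta_odd)+
  show "susy_curv N M \<sigma> (superW \<theta>p \<eta> Z) z = gconst c"
    by (rule core[OF Z_holo Z_rank g_nonzero kappa_const])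
qed


end
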